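(* Consider the all-but-one private sequencing scheme described in the context, with constant coverage depth. Let $\beta\in(0,1)$. If for every SNP position $n\in[N]$ $$f(K)\;:=\;\frac{H\big(\mathrm{Bin}(M-1+K,p_n)\big)-H\big(\mathrm{Bin}(K,p_n)\big)}{M-1}\;\le\;\beta,$$ then the privacy condition holds: for every sequencer $s\in[S]$, $$\frac{I\big(X_{m,n},\ m\in\mathcal{A}^{(s)},\ n\in[N];\ \mathcal{R}^{(s)}\big)}{|\mathcal{A}^{(s)}|\,N}\le\beta.$$
   Context: Setting. There are $M\ge2$ unknown individuals, $K$ known individuals, $N$ SNP positions and $S=M$ non-colluding sequencers. The allele of unknown individual $m$ (resp. known individual $k$) at SNP position $n$ is a random variable $X_{m,n}\in\{-1,1\}$ (resp. $Y_{k,n}\in\{-1,1\}$), with value $1$ (major allele) with probability $p_n$ (the major allele frequency at position $n$) and $-1$ otherwise; all these variables are mutually independent. The known individuals' alleles are known to the data collector but not to the sequencers. In the all-but-one scheme, sequencer $s$ receives pooled, untagged fragments of all unknown individuals except individual $s$ and of all known individuals, so $\mathcal{A}^{(s)}=[M]\setminus\{s\}$ is the set of unknown individuals whose fragments are sent to sequencer $s$ ($|\mathcal{A}^{(s)}|=M-1$). Each fragment contains one SNP and is mapped to its position; every individual sent to a sequencer has the same constant coverage depth $\alpha$ at every SNP; each read allele is flipped independently with probability $\eta$. $\mathcal{R}^{(s)}$ denotes the set of reads obtained by sequencer $s$. Model used by the paper: $\mathcal{R}^{(s)}$ is equivalent to the collection $(q^{(s)}_n)_{n\in[N]}$ with $$q^{(s)}_n=\sum_{m\neq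 s}X_{m,n}+\sum_{k=1}^K Y_{k,n}+\tilde Z^{(s)}_n,$$ where $\tilde Z^{(s)}_n\sim\mathcal{N}(0,\sigma^2)$ are noise variables independent of everything else and of each other across $n$. $H(\cdot)$ is discrete (Shannon) entropy, $I(\cdot;\cdot)$ is mutual information, and $\mathrm{Bin}(a,p)$ is a binomial random variable with $a$ trials and success probability $p$. *)

theory Defs
  imports "HOL-Probability.Probability"
begin

text \<open>Shannon entropy (base 2) of the binomial distribution Bin(a,p).
  Its support is contained in {0..a}; terms with zero probability contribute 0
  since log 2 0 = 0 in Isabelle.\<close>
definition binom_entropy :: "nat \<Rightarrow> real \<Rightarrow> real" where
  "binom_entropy a p =
     - (\<Sum>k\<in>{0..a}. pmf (binomial_pmf a p) k * log 2 (pmf (binomial_pmf a p) k))"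

text \<open>Index type for the family of all random variables relevant to one sequencer:
  unknown alleles X m n, known alleles Y k n, noise variables Z n.\<close>
datatype rv_idx = Xi nat nat | Yi nat nat | Zi nat

end

theory Submission
  imports Defs
begin

lemma (in prob_space) integral_finite_valued:
  fixes f :: "'a \<Rightarrow> 'b" and g :: "'b \<Rightarrow> real"
  assumes fin: "finite F" and vals: "\<And>\<omega>. \<omega> \<in> space M \<Longrightarrow> f \<omega> \<in> F"
    and ev: "\<And>a. a \<in> F \<Longrightarrow> {\<omega>\<in>space M. f \<omega> = a} \<in> events"
  shows "(\<integral>\<omega>. g (f \<omega>) \<partial>M) = (\<Sum>a\<in>F. prob {\<omega>\<in>space M. f \<omega> = a} * g a)"
proof -
  have "(\<integral>\<omega>. g (f \<omega>) \<partial>M) = (\<integral>\<omega>. (\<Sum>a\<in>F. indicator {\<omega>\<in>space M. f \<omega> = a} \<omega> * g a) \<partial>M)"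
  proof (rule Bochner_Integration.integral_cong)
    fix \<omega> assume w: "\<omega> \<in> space M"
    have "(\<Sum>a\<in>F. indicator {\<omega>\<in>space M. f \<omega> = a} \<omega> * g a) = (\<Sum>a\<in>F. if a = f \<omega> then g a else 0)"
      using w by (intro sum.cong) (auto simp: indicator_def)
    also have "\<dots> = g (f \<omega>)" using fin vals[OF w] by (simp add: sum.delta')
    finally show "g (f \<omega>) = (\<Sum>a\<in>F. indicator {\<omega>\<in>space M. f \<omega> = a} \<omega> * g a)" by simp
  qed simp
  also have "\<dots> = (\<Sum>a\<in>F. (\<integral>\<omega>. indicator {\<omega>\<in>space M. f \<omega> = a} \<omega> * g a \<partial>M))"
    by (rule Bochner_Integration.integral_sum) (auto intro!: integrable_mult_left integrable_real_indicator ev simp: less_top[symmetric])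
  also have "\<dots> = (\<Sum>a\<in>F. prob {\<omega>\<in>space M. f \<omega> = a} * g a)"
    using ev by (intro sum.cong) auto
  finally show ?thesis .
qed

lemma ln_ge_1_minus_inv: "0 < (t::real) \<Longrightarrow> 1 - 1 / t \<le> ln t"
proof -
  assume t: "0 < t"
  have "ln (1/t) \<le> 1/t - 1" using t by (intro ln_le_minus_one) simp
  then show ?thesis using t by (simp add: ln_div)
qed

lemma log_sum_term:
  fixes a c p A b :: real
  assumes b: "1 < b" and a: "0 \<le> a" and c: "0 \<le> c" and p: "0 < p" and A: "0 < A"
  shows "(a * c - p * c * A) / ln b \<le> a * c * log b (a / p) - a * c * log b A"
proof (cases "a * c = 0")
  case True
  have l: "0 < ln b" using b by simp
  have "p * c * A \<ge> 0" using p c A by simp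
  then have "a * c - p * c * A \<le> 0" using True by auto
  then have "(a * c - p * c * A) / ln b \<le> 0" using l by (rule divide_nonpos_pos)
  moreover have "a * c * log b (a / p) - a * c * log b A = 0" using True by simp
  ultimately show ?thesis by linarith
next
  case False
  then have a0: "0 < a" and c0: "0 < c" using a c by (auto simp: less_le)
  define t where "t = a / (p * A)"
  have t0: "0 < t" using a0 p A by (simp add: t_def)
  have "log b (a / p) - log b A = ln t / ln b"
    using a0 p A b by (simp add: log_def t_def ln_div ln_mult diff_divide_distrib add_divide_distrib)
  moreover have "(a * c - p * c * A) = a * c * (1 - 1 / t)"
    using a0 p A by (simp add: t_def field_simps)
  moreover have "a * c * (1 - 1 / t) \<le> a * c * ln t"
    using ln_ge_1_minus_inv[OF t0] a0 c0 by (intro mult_left_mono) auto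
  ultimately show ?thesis using b
    by (simp add: right_diff_distrib[symmetric] divide_right_mono)
qed

lemma log_sum_ineq:
  fixes a c p :: "'i \<Rightarrow> real"
  assumes fin: "finite I" and b: "1 < b" and a: "\<forall>i\<in>I. 0 \<le> a i" and c: "\<forall>i\<in>I. 0 \<le> c i"
    and p: "\<forall>i\<in>I. 0 < p i" and s: "(\<Sum>i\<in>I. p i * c i) = 1"
  shows "(\<Sum>i\<in>I. a i * c i) * log b (\<Sum>i\<in>I. a i * c i) \<le> (\<Sum>i\<in>I. a i * c i * log b (a i / p i))"
proof -
  define A where "A = (\<Sum>i\<in>I. a i * c i)"
  have A0: "0 \<le> A" unfolding A_def using a c by (intro sum_nonneg) auto
  show ?thesis
  proof (cases "A = 0")
    case True
    then have "\<forall>i\<in>I. a i * c i = 0" using fin a c unfolding A_def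
      by (subst (asm) sum_nonneg_eq_0_iff) auto
    then have "(\<Sum>i\<in>I. a i * c i * log b (a i / p i)) = 0" by (intro sum.neutral) simp
    then show ?thesis using True unfolding A_def by simp
  next
    case False
    then have Ap: "0 < A" using A0 by simp
    have "(\<Sum>i\<in>I. (a i * c i - p i * c i * A) / ln b) \<le> (\<Sum>i\<in>I. a i * c i * log b (a i / p i) - a i * c i * log b A)"
      using a c p Ap b by (intro sum_mono log_sum_term) auto
    moreover have "(\<Sum>i\<in>I. (a i * c i - p i * c i * A) / ln b) = (A - A * (\<Sum>i\<in>I. p i * c i)) / ln b"
      unfolding A_def by (simp add: sum_divide_distrib[symmetric] sum_subtractf sum_distrib_left sum_distrib_right mult.commute mult.left_commute)
    moreover have "(\<Sum>i\<in>I. a i * c i * log b (a i / p i) - a i * c i * log b A) = (\<Sum>i\<in>I. a i * c i * log b (a i / p i)) - A * log b A"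
      unfolding A_def by (simp add: sum_subtractf sum_distrib_right)
    ultimately show ?thesis using s unfolding A_def by simp
  qed
qed


lemma (in prob_space) prob_partition:
  fixes f :: "'a \<Rightarrow> 'b"
  assumes fin: "finite F" and vals: "\<And>\<omega>. \<omega> \<in> space M \<Longrightarrow> f \<omega> \<in> F"
    and ev: "\<And>a. a \<in> F \<Longrightarrow> {\<omega>\<in>space M. P \<omega> \<and> f \<omega> = a} \<in> events"
  shows "prob {\<omega>\<in>space M. P \<omega>} = (\<Sum>a\<in>F. prob {\<omega>\<in>space M. P \<omega> \<and> f \<omega> = a})"
proof -
  have "{\<omega>\<in>space M. P \<omega>} = (\<Union>a\<in>F. {\<omega>\<in>space M. P \<omega> \<and> f \<omega> = a})"
    using vals by auto
  then have "prob {\<omega>\<in>space M. P \<omega>} = prob (\<Union>a\<in>F. {\<omega>\<in>space M. P \<omega> \<and> f \<omega> = a})" by simp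
  also have "\<dots> = (\<Sum>a\<in>F. prob {\<omega>\<in>space M. P \<omega> \<and> f \<omega> = a})"
    using fin ev by (intro finite_measure_finite_Union) (auto simp: disjoint_family_on_def)
  finally show ?thesis .
qed

lemma (in prob_space) nn_integral_finite_valued:
  fixes f :: "'a \<Rightarrow> 'b" and g :: "'b \<Rightarrow> ennreal"
  assumes fin: "finite F" and vals: "\<And>\<omega>. \<omega> \<in> space M \<Longrightarrow> f \<omega> \<in> F"
    and ev: "\<And>a. a \<in> F \<Longrightarrow> {\<omega>\<in>space M. f \<omega> = a} \<in> events"
  shows "(\<integral>\<^sup>+\<omega>. g (f \<omega>) \<partial>M) = (\<Sum>a\<in>F. ennreal (prob {\<omega>\<in>space M. f \<omega> = a}) * g a)"
proof -
  have "(\<integral>\<^sup>+\<omega>. g (f \<omega>) \<partial>M) = (\<integral>\<^sup>+\<omega>. (\<Sum>a\<in>F. g a * indicator {\<omega>\<in>space M. f \<omega> = a} \<omega>) \<partial>M)"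
  proof (rule nn_integral_cong)
    fix \<omega> assume w: "\<omega> \<in> space M"
    have "(\<Sum>a\<in>F. g a * indicator {\<omega>\<in>space M. f \<omega> = a} \<omega>) = (\<Sum>a\<in>F. if a = f \<omega> then g a else 0)"
      using w by (intro sum.cong) (auto simp: indicator_def)
    also have "\<dots> = g (f \<omega>)" using fin vals[OF w] by (simp add: sum.delta')
    finally show "g (f \<omega>) = (\<Sum>a\<in>F. g a * indicator {\<omega>\<in>space M. f \<omega> = a} \<omega>)" by simp
  qed
  also have "\<dots> = (\<Sum>a\<in>F. (\<integral>\<^sup>+\<omega>. g a * indicator {\<omega>\<in>space M. f \<omega> = a} \<omega> \<partial>M))"
    using ev by (intro nn_integral_sum) auto
  also have "\<dots> = (\<Sum>a\<in>F. ennreal (prob {\<omega>\<in>space M. f \<omega> = a}) * g a)"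
    using ev by (intro sum.cong) (auto simp: nn_integral_cmult_indicator emeasure_eq_measure mult.commute)
  finally show ?thesis .
qed

lemma (in prob_space) nn_integral_pair_fv:
  fixes \<xi> :: "'a \<Rightarrow> 'x" and H :: "'x \<times> 'y \<Rightarrow> ennreal"
  assumes xi[measurable]: "\<xi> \<in> measurable M S"
    and fin: "finite Fx" and vals: "\<And>\<omega>. \<omega> \<in> space M \<Longrightarrow> \<xi> \<omega> \<in> Fx"
    and ev: "\<And>a. a \<in> Fx \<Longrightarrow> {\<omega>\<in>space M. \<xi> \<omega> = a} \<in> events"
    and N: "sigma_finite_measure N"
    and H[measurable]: "H \<in> borel_measurable (S \<Otimes>\<^sub>M N)"
  shows "(\<integral>\<^sup>+z. H z \<partial>(distr M S \<xi> \<Otimes>\<^sub>M N)) = (\<Sum>x\<in>Fx. ennreal (prob {\<omega>\<in>space M. \<xi> \<omega> = x}) * (\<integral>\<^sup>+y. H (x, y) \<partial>N))"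
proof -
  interpret N: sigma_finite_measure N by fact
  have Hm: "H \<in> borel_measurable (distr M S \<xi> \<Otimes>\<^sub>M N)"
    using H by (simp add: measurable_def space_pair_measure sets_pair_measure)
  have "(\<integral>\<^sup>+z. H z \<partial>(distr M S \<xi> \<Otimes>\<^sub>M N)) = (\<integral>\<^sup>+x. (\<integral>\<^sup>+y. H (x, y) \<partial>N) \<partial>distr M S \<xi>)"
    by (rule N.nn_integral_fst[symmetric, OF Hm])
  also have "\<dots> = (\<integral>\<^sup>+\<omega>. (\<integral>\<^sup>+y. H (\<xi> \<omega>, y) \<partial>N) \<partial>M)"
    by (rule nn_integral_distr) (auto intro!: N.borel_measurable_nn_integral_fst[OF H])
  also have "\<dots> = (\<Sum>x\<in>Fx. ennreal (prob {\<omega>\<in>space M. \<xi> \<omega> = x}) * (\<integral>\<^sup>+y. H (x, y) \<partial>N))"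
    by (rule nn_integral_finite_valued[OF fin vals ev])
  finally show ?thesis .
qed

lemma (in prob_space) integral_pair_fv:
  fixes \<xi> :: "'a \<Rightarrow> 'x" and H :: "'x \<times> 'y \<Rightarrow> real"
  assumes xi[measurable]: "\<xi> \<in> measurable M S"
    and fin: "finite Fx" and vals: "\<And>\<omega>. \<omega> \<in> space M \<Longrightarrow> \<xi> \<omega> \<in> Fx"
    and xs: "\<And>a. a \<in> Fx \<Longrightarrow> {a} \<in> sets S"
    and N: "sigma_finite_measure N"
    and H[measurable]: "H \<in> borel_measurable (S \<Otimes>\<^sub>M N)"
    and Hi: "\<And>x. x \<in> Fx \<Longrightarrow> integrable N (\<lambda>y. H (x, y))"
  shows "integrable (distr M S \<xi> \<Otimes>\<^sub>M N) H"
    and "(\<integral>z. H z \<partial>(distr M S \<xi> \<Otimes>\<^sub>M N)) = (\<Sum>x\<in>Fx. prob {\<omega>\<in>space M. \<xi> \<omega> = x} * (\<integral>y. H (x, y) \<partial>N))"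
proof -
  interpret N: sigma_finite_measure N by fact
  interpret D: prob_space "distr M S \<xi>" by (rule prob_space_distr) simp
  interpret pair_sigma_finite "distr M S \<xi>" N ..
  have ev: "\<And>a. a \<in> Fx \<Longrightarrow> {\<omega>\<in>space M. \<xi> \<omega> = a} \<in> events"
  proof -
    fix a assume "a \<in> Fx"
    then have "\<xi> -` {a} \<inter> space M \<in> events" using xs by (intro measurable_sets[OF xi]) auto
    moreover have "\<xi> -` {a} \<inter> space M = {\<omega>\<in>space M. \<xi> \<omega> = a}" by auto
    ultimately show "{\<omega>\<in>space M. \<xi> \<omega> = a} \<in> events" by simp
  qed
  have Hm: "H \<in> borel_measurable (distr M S \<xi> \<Otimes>\<^sub>M N)"
    using H by (simp add: measurable_def space_pair_measure sets_pair_measure)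
  have Fxs: "{x\<in>space S. x \<in> Fx} \<in> sets S"
  proof -
    have "{x\<in>space S. x \<in> Fx} = (\<Union>a\<in>Fx. {a}) \<inter> space S" by auto
    also have "\<dots> \<in> sets S" using fin xs by (intro sets.Int sets.finite_UN) auto
    finally show ?thesis .
  qed
  have AEx: "AE x in distr M S \<xi>. x \<in> Fx"
    using vals Fxs by (subst AE_distr_iff) auto
  have m1: "(\<lambda>x. \<integral>y. norm (H (x, y)) \<partial>N) \<in> borel_measurable S"
    by (rule N.borel_measurable_lebesgue_integral) simp
  have m2: "(\<lambda>x. \<integral>y. H (x, y) \<partial>N) \<in> borel_measurable S"
    by (rule N.borel_measurable_lebesgue_integral) simp
  have fvint: "integrable M (\<lambda>\<omega>. c (\<xi> \<omega>))" for c :: "'x \<Rightarrow> real"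
  proof -
    have "integrable M (\<lambda>\<omega>. \<Sum>a\<in>Fx. indicator {\<omega>\<in>space M. \<xi> \<omega> = a} \<omega> * c a)"
      using ev by (intro Bochner_Integration.integrable_sum integrable_mult_left integrable_real_indicator) (auto simp: less_top[symmetric])
    moreover have "\<And>\<omega>. \<omega> \<in> space M \<Longrightarrow> (\<Sum>a\<in>Fx. indicator {\<omega>\<in>space M. \<xi> \<omega> = a} \<omega> * c a) = c (\<xi> \<omega>)"
    proof -
      fix \<omega> assume w: "\<omega> \<in> space M"
      have "(\<Sum>a\<in>Fx. indicator {\<omega>\<in>space M. \<xi> \<omega> = a} \<omega> * c a) = (\<Sum>a\<in>Fx. if a = \<xi> \<omega> then c a else 0)"
        using w by (intro sum.cong) (auto simp: indicator_def)
      also have "\<dots> = c (\<xi> \<omega>)" using fin vals[OF w] by (simp add: sum.delta')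
      finally show "(\<Sum>a\<in>Fx. indicator {\<omega>\<in>space M. \<xi> \<omega> = a} \<omega> * c a) = c (\<xi> \<omega>)" .
    qed
    ultimately show ?thesis using Bochner_Integration.integrable_cong[where M=M and N=M and f="\<lambda>\<omega>. \<Sum>a\<in>Fx. indicator {\<omega>\<in>space M. \<xi> \<omega> = a} \<omega> * c a" and g="\<lambda>\<omega>. c (\<xi> \<omega>)"] by simp
  qed
  show int: "integrable (distr M S \<xi> \<Otimes>\<^sub>M N) H"
  proof (rule Fubini_integrable[OF Hm])
    show "integrable (distr M S \<xi>) (\<lambda>x. \<integral>y. norm (H (x, y)) \<partial>N)"
      using m1 by (subst integrable_distr_eq) (auto intro: fvint)
    show "AE x in distr M S \<xi>. integrable N (\<lambda>y. H (x, y))"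
      using AEx by eventually_elim (rule Hi)
  qed
  have "(\<integral>z. H z \<partial>(distr M S \<xi> \<Otimes>\<^sub>M N)) = (\<integral>x. (\<integral>y. H (x, y) \<partial>N) \<partial>distr M S \<xi>)"
    by (rule integral_fst'[symmetric, OF int])
  also have "\<dots> = (\<integral>\<omega>. (\<integral>y. H (\<xi> \<omega>, y) \<partial>N) \<partial>M)"
    using m2 by (subst integral_distr) auto
  also have "\<dots> = (\<Sum>x\<in>Fx. prob {\<omega>\<in>space M. \<xi> \<omega> = x} * (\<integral>y. H (x, y) \<partial>N))"
    by (rule integral_finite_valued[OF fin vals ev])
  finally show "(\<integral>z. H z \<partial>(distr M S \<xi> \<Otimes>\<^sub>M N)) = (\<Sum>x\<in>Fx. prob {\<omega>\<in>space M. \<xi> \<omega> = x} * (\<integral>y. H (x, y) \<partial>N))" .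
qed


lemma pm1_sum_vals:
  fixes v :: "'i \<Rightarrow> real"
  assumes "finite J" "\<forall>j\<in>J. v j \<in> {-1, 1}"
  shows "\<exists>k\<le>card J. (\<Sum>j\<in>J. v j) = 2 * real k - real (card J)"
  using assms
proof (induction J rule: finite_induct)
  case empty then show ?case by simp
next
  case (insert j J)
  then obtain k where k: "k \<le> card J" "(\<Sum>j\<in>J. v j) = 2 * real k - real (card J)" by auto
  have vj: "v j = -1 \<or> v j = 1" using insert by auto
  then show ?case
  proof
    assume "v j = -1"
    then show ?thesis using insert k by (intro exI[of _ k]) auto
  next
    assume "v j = 1"
    then show ?thesis using insert k by (intro exI[of _ "Suc k"]) auto
  qed
qed

lemma binom_rec0:
  fixes p :: real
  shows "real (Suc c choose 0) * p ^ 0 * (1 - p) ^ (Suc c - 0) = (1 - p) * (real (c choose 0) * p ^ 0 * (1 - p) ^ (c - 0))"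
  by simp

lemma binom_recS:
  fixes p :: real
  shows "real (Suc c choose Suc k) * p ^ Suc k * (1 - p) ^ (Suc c - Suc k) =
    p * (real (c choose k) * p ^ k * (1 - p) ^ (c - k)) + (1 - p) * (real (c choose Suc k) * p ^ Suc k * (1 - p) ^ (c - Suc k))"
proof (cases "Suc k \<le> c")
  case True
  then have e: "c - k = Suc (c - Suc k)" by simp
  have pw: "(1-p)^(c-k) = (1-p) * (1-p)^(c - Suc k)" by (simp only: e power_Suc)
  show ?thesis by (simp only: binomial_Suc_Suc diff_Suc_Suc of_nat_add pw) (simp add: algebra_simps)
next
  case False
  then have "c choose Suc k = 0" by simp
  then show ?thesis by (simp add: algebra_simps)
qed

lemma (in prob_space) integrable_finite_valued:
  fixes f :: "'a \<Rightarrow> 'b" and g :: "'b \<Rightarrow> real"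
  assumes fin: "finite F" and vals: "\<And>\<omega>. \<omega> \<in> space M \<Longrightarrow> f \<omega> \<in> F"
    and ev: "\<And>a. a \<in> F \<Longrightarrow> {\<omega>\<in>space M. f \<omega> = a} \<in> events"
  shows "integrable M (\<lambda>\<omega>. g (f \<omega>))"
proof -
  have "integrable M (\<lambda>\<omega>. \<Sum>a\<in>F. indicator {\<omega>\<in>space M. f \<omega> = a} \<omega> * g a)"
    using ev by (intro Bochner_Integration.integrable_sum integrable_mult_left integrable_real_indicator) (auto simp: less_top[symmetric])
  moreover have "\<And>\<omega>. \<omega> \<in> space M \<Longrightarrow> (\<Sum>a\<in>F. indicator {\<omega>\<in>space M. f \<omega> = a} \<omega> * g a) = g (f \<omega>)"
  proof -
    fix \<omega> assume w: "\<omega> \<in> space M"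
    have "(\<Sum>a\<in>F. indicator {\<omega>\<in>space M. f \<omega> = a} \<omega> * g a) = (\<Sum>a\<in>F. if a = f \<omega> then g a else 0)"
      using w by (intro sum.cong) (auto simp: indicator_def)
    also have "\<dots> = g (f \<omega>)" using fin vals[OF w] by (simp add: sum.delta')
    finally show "(\<Sum>a\<in>F. indicator {\<omega>\<in>space M. f \<omega> = a} \<omega> * g a) = g (f \<omega>)" .
  qed
  ultimately show ?thesis using Bochner_Integration.integrable_cong[where M=M and N=M and f="\<lambda>\<omega>. \<Sum>a\<in>F. indicator {\<omega>\<in>space M. f \<omega> = a} \<omega> * g a" and g="\<lambda>\<omega>. g (f \<omega>)"] by simp
qed

lemma (in prob_space) sum_pm1_binomial:
  fixes V :: "'i \<Rightarrow> 'a \<Rightarrow> real"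
  assumes fin: "finite J" and ind: "indep_vars (\<lambda>_. borel) V J"
    and vals: "\<And>j \<omega>. j \<in> J \<Longrightarrow> \<omega> \<in> space M \<Longrightarrow> V j \<omega> \<in> {-1, 1}"
    and pr: "\<And>j. j \<in> J \<Longrightarrow> prob {\<omega>\<in>space M. V j \<omega> = 1} = p"
    and p: "0 \<le> p" "p \<le> 1"
  shows "prob {\<omega>\<in>space M. (\<Sum>j\<in>J. V j \<omega>) = 2 * real k - real (card J)} = pmf (binomial_pmf (card J) p) k"
  using fin ind vals pr
proof (induction J arbitrary: k rule: finite_induct)
  case empty
  have "{\<omega>\<in>space M. (0::real) = 2 * real k} = (if k = 0 then space M else {})" by auto
  then show ?case using p by (simp add: pmf_binomial prob_space)
next
  case (insert j J)
  have indJ: "indep_vars (\<lambda>_. borel) V J" using insert.prems(1) by (rule indep_vars_subset) auto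
  have IH: "prob {\<omega>\<in>space M. (\<Sum>j\<in>J. V j \<omega>) = 2 * real k' - real (card J)} = pmf (binomial_pmf (card J) p) k'" for k'
    using insert.IH[OF indJ] insert.prems(2,3) by auto
  have rv: "random_variable borel (V i)" if "i \<in> insert j J" for i
    using insert.prems(1) that unfolding indep_vars_def by auto
  have ij: "indep_var borel (V j) borel (\<lambda>\<omega>. \<Sum>i\<in>J. V i \<omega>)"
    using insert.hyps insert.prems(1) by (intro indep_vars_sum) auto
  have rvS: "random_variable borel (\<lambda>\<omega>. \<Sum>i\<in>J. V i \<omega>)" using rv by measurable
  have pj1: "prob {\<omega>\<in>space M. V j \<omega> = 1} = p" using insert.prems(3) by auto
  have pjm: "prob {\<omega>\<in>space M. V j \<omega> = -1} = 1 - p"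
  proof -
    have "{\<omega>\<in>space M. V j \<omega> = -1} = space M - {\<omega>\<in>space M. V j \<omega> = 1}" using insert.prems(2) by force
    moreover have "{\<omega>\<in>space M. V j \<omega> = 1} \<in> events" using rv[of j] by measurable
    ultimately show ?thesis using pj1 by (simp add: prob_compl)
  qed
  have joint: "prob {\<omega>\<in>space M. V j \<omega> = a \<and> (\<Sum>i\<in>J. V i \<omega>) = t} = prob {\<omega>\<in>space M. V j \<omega> = a} * prob {\<omega>\<in>space M. (\<Sum>i\<in>J. V i \<omega>) = t}" for a t
    using prob_indep_random_variable[OF ij, of "{a}" "{t}"] by simp
  define c where "c = card J"
  have cJ: "card (insert j J) = Suc c" using insert.hyps unfolding c_def by simp
  have sumins: "(\<Sum>i\<in>insert j J. V i \<omega>) = V j \<omega> + (\<Sum>i\<in>J. V i \<omega>)" for \<omega> using insert.hyps by simp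
  have low: "prob {\<omega>\<in>space M. (\<Sum>i\<in>J. V i \<omega>) = t} = 0" if "t < - real c" for t
  proof -
    have "{\<omega>\<in>space M. (\<Sum>i\<in>J. V i \<omega>) = t} = {}"
    proof -
      have False if w: "\<omega> \<in> space M" and e: "(\<Sum>i\<in>J. V i \<omega>) = t" for \<omega>
      proof -
        obtain k' where "k' \<le> card J" "(\<Sum>i\<in>J. V i \<omega>) = 2 * real k' - real (card J)"
          using pm1_sum_vals[of J "\<lambda>i. V i \<omega>"] insert.hyps insert.prems(2) w by auto
        then show False using e \<open>t < - real c\<close> unfolding c_def by simp
      qed
      then show "{\<omega>\<in>space M. (\<Sum>i\<in>J. V i \<omega>) = t} = {}" by auto
    qed
    then show ?thesis by (simp only: measure_empty)
  qed
  have split: "prob {\<omega>\<in>space M. (\<Sum>i\<in>insert j J. V i \<omega>) = 2 * real k - real (Suc c)} =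
     prob {\<omega>\<in>space M. V j \<omega> = 1 \<and> (\<Sum>i\<in>J. V i \<omega>) = 2 * real k - real c - 2} +
     prob {\<omega>\<in>space M. V j \<omega> = -1 \<and> (\<Sum>i\<in>J. V i \<omega>) = 2 * real k - real c}"
  proof -
    have "{\<omega>\<in>space M. (\<Sum>i\<in>insert j J. V i \<omega>) = 2 * real k - real (Suc c)} =
      {\<omega>\<in>space M. V j \<omega> = 1 \<and> (\<Sum>i\<in>J. V i \<omega>) = 2 * real k - real c - 2} \<union>
      {\<omega>\<in>space M. V j \<omega> = -1 \<and> (\<Sum>i\<in>J. V i \<omega>) = 2 * real k - real c}"
      using insert.prems(2) unfolding sumins by (auto; force)
    moreover have "{\<omega>\<in>space M. V j \<omega> = 1 \<and> (\<Sum>i\<in>J. V i \<omega>) = 2 * real k - real c - 2} \<in> events"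
      using rv[of j] rvS by measurable
    moreover have "{\<omega>\<in>space M. V j \<omega> = -1 \<and> (\<Sum>i\<in>J. V i \<omega>) = 2 * real k - real c} \<in> events"
      using rv[of j] rvS by measurable
    ultimately show ?thesis by (subst finite_measure_Union[symmetric]) auto
  qed
  show ?case
  proof (cases k)
    case 0
    have "prob {\<omega>\<in>space M. (\<Sum>i\<in>insert j J. V i \<omega>) = 2 * real k - real (card (insert j J))} = (1 - p) * pmf (binomial_pmf c p) 0"
      unfolding cJ split joint pj1 pjm using low[of "- real c - 2"] IH[of 0] 0 unfolding c_def by simp
    then show ?thesis using 0 p cJ by (simp add: pmf_binomial)
  next
    case (Suc k')
    have e1: "2 * real k - real c - 2 = 2 * real k' - real c" using Suc by simp
    have "prob {\<omega>\<in>space M. (\<Sum>i\<in>insert j J. V i \<omega>) = 2 * real k - real (card (insert j J))} =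
        p * pmf (binomial_pmf c p) k' + (1 - p) * pmf (binomial_pmf c p) (Suc k')"
      unfolding cJ split joint pj1 pjm e1 using IH[of k'] IH[of "Suc k'"] Suc unfolding c_def by simp
    then show ?thesis using Suc p cJ binom_recS[of c k' p] by (simp add: pmf_binomial)
  qed
qed


lemma (in prob_space) sum_pm1_entropy:
  fixes V :: "'i \<Rightarrow> 'a \<Rightarrow> real"
  assumes fin: "finite J" and ind: "indep_vars (\<lambda>_. borel) V J"
    and vals: "\<And>j \<omega>. j \<in> J \<Longrightarrow> \<omega> \<in> space M \<Longrightarrow> V j \<omega> \<in> {-1, 1}"
    and pr: "\<And>j. j \<in> J \<Longrightarrow> prob {\<omega>\<in>space M. V j \<omega> = 1} = p"
    and p: "0 \<le> p" "p \<le> 1"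
  shows "(\<integral>\<omega>. log 2 (prob {\<omega>'\<in>space M. (\<Sum>j\<in>J. V j \<omega>') = (\<Sum>j\<in>J. V j \<omega>)}) \<partial>M) = - binom_entropy (card J) p"
    and "integrable M (\<lambda>\<omega>. log 2 (prob {\<omega>'\<in>space M. (\<Sum>j\<in>J. V j \<omega>') = (\<Sum>j\<in>J. V j \<omega>)}))"
proof -
  define c where "c = card J"
  define Vals where "Vals = (\<lambda>k. 2 * real k - real c) ` {0..c}"
  have rv: "random_variable borel (V i)" if "i \<in> J" for i
    using ind that unfolding indep_vars_def by auto
  have rvS: "random_variable borel (\<lambda>\<omega>. \<Sum>i\<in>J. V i \<omega>)" using rv by measurable
  have inT: "(\<Sum>j\<in>J. V j \<omega>) \<in> Vals" if "\<omega> \<in> space M" for \<omega>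
    using pm1_sum_vals[of J "\<lambda>j. V j \<omega>"] fin vals that unfolding Vals_def c_def by auto
  have ev: "{\<omega>\<in>space M. (\<Sum>j\<in>J. V j \<omega>) = t} \<in> events" for t using rvS by measurable
  have finV: "finite Vals" unfolding Vals_def by simp
  show "integrable M (\<lambda>\<omega>. log 2 (prob {\<omega>'\<in>space M. (\<Sum>j\<in>J. V j \<omega>') = (\<Sum>j\<in>J. V j \<omega>)}))"
    by (rule integrable_finite_valued[OF finV inT ev])
  have "(\<integral>\<omega>. log 2 (prob {\<omega>'\<in>space M. (\<Sum>j\<in>J. V j \<omega>') = (\<Sum>j\<in>J. V j \<omega>)}) \<partial>M) =
      (\<Sum>t\<in>Vals. prob {\<omega>\<in>space M. (\<Sum>j\<in>J. V j \<omega>) = t} * log 2 (prob {\<omega>'\<in>space M. (\<Sum>j\<in>J. V j \<omega>') = t}))"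
    by (rule integral_finite_valued[OF finV inT ev])
  also have "\<dots> = (\<Sum>k\<in>{0..c}. prob {\<omega>\<in>space M. (\<Sum>j\<in>J. V j \<omega>) = 2 * real k - real c} * log 2 (prob {\<omega>'\<in>space M. (\<Sum>j\<in>J. V j \<omega>') = 2 * real k - real c}))"
    unfolding Vals_def by (subst sum.reindex) (auto simp: inj_on_def)
  also have "\<dots> = (\<Sum>k\<in>{0..c}. pmf (binomial_pmf c p) k * log 2 (pmf (binomial_pmf c p) k))"
    using sum_pm1_binomial[OF fin ind vals pr p] unfolding c_def by simp
  also have "\<dots> = - binom_entropy c p" unfolding binom_entropy_def by simp
  finally show "(\<integral>\<omega>. log 2 (prob {\<omega>'\<in>space M. (\<Sum>j\<in>J. V j \<omega>') = (\<Sum>j\<in>J. V j \<omega>)}) \<partial>M) = - binom_entropy (card J) p"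
    unfolding c_def .
qed



lemma (in prob_space) indep_blocks_prob:
  fixes V :: "'i \<Rightarrow> 'a \<Rightarrow> real"
  assumes ind: "indep_vars (\<lambda>_. borel) V I" and Kb: "\<And>j. j \<in> L \<Longrightarrow> Kb j \<subseteq> I"
    and disj: "disjoint_family_on Kb L" and fin: "finite L" "L \<noteq> {}"
    and A: "\<And>j. j \<in> L \<Longrightarrow> A j \<in> sets (PiM (Kb j) (\<lambda>_. borel))"
  shows "prob {\<omega>\<in>space M. \<forall>j\<in>L. (\<lambda>i\<in>Kb j. V i \<omega>) \<in> A j} = (\<Prod>j\<in>L. prob {\<omega>\<in>space M. (\<lambda>i\<in>Kb j. V i \<omega>) \<in> A j})"
proof -
  have iv: "indep_vars (\<lambda>j. PiM (Kb j) (\<lambda>_. borel)) (\<lambda>j \<omega>. \<lambda>i\<in>Kb j. V i \<omega>) L"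
    by (rule indep_vars_restrict[OF ind Kb disj])
  have "prob (\<Inter>j\<in>L. (\<lambda>\<omega>. \<lambda>i\<in>Kb j. V i \<omega>) -` A j \<inter> space M) = (\<Prod>j\<in>L. prob ((\<lambda>\<omega>. \<lambda>i\<in>Kb j. V i \<omega>) -` A j \<inter> space M))"
    using iv fin A by (intro indep_varsD) auto
  moreover have "(\<Inter>j\<in>L. (\<lambda>\<omega>. \<lambda>i\<in>Kb j. V i \<omega>) -` A j \<inter> space M) = {\<omega>\<in>space M. \<forall>j\<in>L. (\<lambda>i\<in>Kb j. V i \<omega>) \<in> A j}"
    using fin(2) by auto
  moreover have "\<And>j. (\<lambda>\<omega>. \<lambda>i\<in>Kb j. V i \<omega>) -` A j \<inter> space M = {\<omega>\<in>space M. (\<lambda>i\<in>Kb j. V i \<omega>) \<in> A j}"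
    by auto
  ultimately show ?thesis by simp
qed

lemma singleton_PiM:
  fixes x :: "'i \<Rightarrow> real"
  assumes "finite I" "x \<in> extensional I"
  shows "{x} \<in> sets (PiM I (\<lambda>_. borel))"
proof -
  have "PiE I (\<lambda>i. {x i}) = {x}" using assms(2) by (auto simp: PiE_def extensional_def Pi_def fun_eq_iff) metis
  moreover have "PiE I (\<lambda>i. {x i}) \<in> sets (PiM I (\<lambda>_. borel))"
    using assms(1) by (intro sets_PiM_I_finite) auto
  ultimately show ?thesis by simp
qed



lemma (in prob_space) core_dpi:
  fixes \<xi> :: "'a \<Rightarrow> 'x" and Uv :: "'a \<Rightarrow> 'u" and Zv q :: "'a \<Rightarrow> 't" and addf :: "'u \<Rightarrow> 't \<Rightarrow> 't"
  assumes b: "1 < b"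
    and xi[measurable]: "\<xi> \<in> measurable M S"
    and finx: "finite Fx" and xv: "\<And>\<omega>. \<omega> \<in> space M \<Longrightarrow> \<xi> \<omega> \<in> Fx"
    and xs: "\<And>x. x \<in> Fx \<Longrightarrow> {x} \<in> sets S"
    and finu: "finite Fu" and uv: "\<And>\<omega>. \<omega> \<in> space M \<Longrightarrow> Uv \<omega> \<in> Fu"
    and ue: "\<And>u. u \<in> Fu \<Longrightarrow> {\<omega>\<in>space M. Uv \<omega> = u} \<in> events"
    and Zm[measurable]: "Zv \<in> measurable M T"
    and addm: "\<And>u. u \<in> Fu \<Longrightarrow> addf u \<in> measurable T T"
    and qm[measurable]: "q \<in> measurable M T"
    and qeq: "\<And>\<omega>. \<omega> \<in> space M \<Longrightarrow> q \<omega> = addf (Uv \<omega>) (Zv \<omega>)"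
    and ind: "\<And>x u B. x \<in> Fx \<Longrightarrow> u \<in> Fu \<Longrightarrow> B \<in> sets T \<Longrightarrow>
       prob {\<omega>\<in>space M. \<xi> \<omega> = x \<and> Uv \<omega> = u \<and> Zv \<omega> \<in> B}
         = prob {\<omega>\<in>space M. \<xi> \<omega> = x \<and> Uv \<omega> = u} * prob {\<omega>\<in>space M. Zv \<omega> \<in> B}"
  shows "mutual_information b S T \<xi> q = 0 \<or> mutual_information b S T \<xi> q \<le>
     (\<Sum>x\<in>Fx. \<Sum>u\<in>Fu. prob {\<omega>\<in>space M. \<xi> \<omega> = x \<and> Uv \<omega> = u} *
        log b (prob {\<omega>\<in>space M. \<xi> \<omega> = x \<and> Uv \<omega> = u} /
               (prob {\<omega>\<in>space M. \<xi> \<omega> = x} * prob {\<omega>\<in>space M. Uv \<omega> = u})))"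
proof -
  define Px where "Px x = prob {\<omega>\<in>space M. \<xi> \<omega> = x}" for x
  define Pu where "Pu u = prob {\<omega>\<in>space M. Uv \<omega> = u}" for u
  define Pxu where "Pxu x u = prob {\<omega>\<in>space M. \<xi> \<omega> = x \<and> Uv \<omega> = u}" for x u
  have ex: "{\<omega>\<in>space M. \<xi> \<omega> = x} \<in> events" if "x \<in> Fx" for x
  proof -
    have "\<xi> -` {x} \<inter> space M \<in> events" using xs that by (intro measurable_sets[OF xi]) auto
    moreover have "\<xi> -` {x} \<inter> space M = {\<omega>\<in>space M. \<xi> \<omega> = x}" by auto
    ultimately show ?thesis by simp
  qed
  have exu: "{\<omega>\<in>space M. \<xi> \<omega> = x \<and> Uv \<omega> = u} \<in> events" if "x \<in> Fx" "u \<in> Fu" for x u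
  proof -
    have "{\<omega>\<in>space M. \<xi> \<omega> = x \<and> Uv \<omega> = u} = {\<omega>\<in>space M. \<xi> \<omega> = x} \<inter> {\<omega>\<in>space M. Uv \<omega> = u}" by auto
    then show ?thesis using ex[OF that(1)] ue[OF that(2)] by auto
  qed
  have Pxu_le_Pu: "Pxu x u \<le> Pu u" if "u \<in> Fu" for x u
    unfolding Pxu_def Pu_def using ue[OF that] by (intro finite_measure_mono) auto
  have Pxu_le_Px: "Pxu x u \<le> Px x" if "x \<in> Fx" for x u
    unfolding Pxu_def Px_def using ex[OF that] by (intro finite_measure_mono) auto
  have Pxu_nn: "0 \<le> Pxu x u" for x u unfolding Pxu_def by simp
  have Pu_sum: "Pu u = (\<Sum>x\<in>Fx. Pxu x u)" if "u \<in> Fu" for u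
    unfolding Pu_def Pxu_def
    by (subst prob_partition[OF finx, of \<xi>]) (use xv exu that in \<open>auto simp: conj_commute\<close>)
  define nu where "nu u = distr M T (\<lambda>\<omega>. addf u (Zv \<omega>))" for u
  define mu where "mu = distr M T q"
  define Dx where "Dx = distr M S \<xi>"
  have num: "(\<lambda>\<omega>. addf u (Zv \<omega>)) \<in> measurable M T" if "u \<in> Fu" for u
    using addm[OF that] by measurable
  interpret mu: prob_space mu unfolding mu_def by (rule prob_space_distr) simp
  interpret Dx: prob_space Dx unfolding Dx_def by (rule prob_space_distr) simp
  have nu_ps: "prob_space (nu u)" if "u \<in> Fu" for u
    unfolding nu_def by (rule prob_space_distr) (rule num[OF that])
  have sets_nu: "sets (nu u) = sets T" for u unfolding nu_def by simp
  have sets_mu: "sets mu = sets T" unfolding mu_def by simp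
  have nu_meas: "measure (nu u) B = prob {\<omega>\<in>space M. Zv \<omega> \<in> addf u -` B \<inter> space T}" 
    if "u \<in> Fu" "B \<in> sets T" for u B
  proof -
    have "measure (nu u) B = prob ((\<lambda>\<omega>. addf u (Zv \<omega>)) -` B \<inter> space M)"
      unfolding nu_def using that num by (subst measure_distr) auto
    also have "(\<lambda>\<omega>. addf u (Zv \<omega>)) -` B \<inter> space M = {\<omega>\<in>space M. Zv \<omega> \<in> addf u -` B \<inter> space T}"
      using measurable_space[OF Zm] by auto
    finally show ?thesis .
  qed
  have joint: "prob {\<omega>\<in>space M. \<xi> \<omega> = x \<and> Uv \<omega> = u \<and> addf u (Zv \<omega>) \<in> B} = Pxu x u * measure (nu u) B"
    if "x \<in> Fx" "u \<in> Fu" "B \<in> sets T" for x u B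
  proof -
    have B': "addf u -` B \<inter> space T \<in> sets T" using addm[OF that(2)] that(3) by (rule measurable_sets)
    have "{\<omega>\<in>space M. \<xi> \<omega> = x \<and> Uv \<omega> = u \<and> addf u (Zv \<omega>) \<in> B} = {\<omega>\<in>space M. \<xi> \<omega> = x \<and> Uv \<omega> = u \<and> Zv \<omega> \<in> addf u -` B \<inter> space T}"
      using measurable_space[OF Zm] by auto
    then show ?thesis using ind[OF that(1,2) B'] nu_meas[OF that(2,3)] unfolding Pxu_def by simp
  qed
  have jointq: "prob {\<omega>\<in>space M. q \<omega> \<in> B \<and> (\<xi> \<omega>, Uv \<omega>) = (x, u)} = Pxu x u * measure (nu u) B"
    if "x \<in> Fx" "u \<in> Fu" "B \<in> sets T" for x u B
  proof -
    have "{\<omega>\<in>space M. q \<omega> \<in> B \<and> (\<xi> \<omega>, Uv \<omega>) = (x, u)} = {\<omega>\<in>space M. \<xi> \<omega> = x \<and> Uv \<omega> = u \<and> addf u (Zv \<omega>) \<in> B}"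
      using qeq by auto
    then show ?thesis using joint[OF that] by simp
  qed
  have qpart: "prob {\<omega>\<in>space M. q \<omega> \<in> B} = (\<Sum>x\<in>Fx. \<Sum>u\<in>Fu. Pxu x u * measure (nu u) B)"
    if B: "B \<in> sets T" for B
  proof -
    have "prob {\<omega>\<in>space M. q \<omega> \<in> B} = (\<Sum>xu\<in>Fx \<times> Fu. prob {\<omega>\<in>space M. q \<omega> \<in> B \<and> (\<xi> \<omega>, Uv \<omega>) = xu})"
    proof (rule prob_partition)
      show "finite (Fx \<times> Fu)" using finx finu by simp
      show "\<And>\<omega>. \<omega> \<in> space M \<Longrightarrow> (\<xi> \<omega>, Uv \<omega>) \<in> Fx \<times> Fu" using xv uv by auto
      fix xu assume xu: "xu \<in> Fx \<times> Fu"
      have "{\<omega>\<in>space M. q \<omega> \<in> B \<and> (\<xi> \<omega>, Uv \<omega>) = xu} = (q -` B \<inter> space M) \<inter> {\<omega>\<in>space M. \<xi> \<omega> = fst xu \<and> Uv \<omega> = snd xu}"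
        by (cases xu) auto
      also have "\<dots> \<in> events" using xu exu[of "fst xu" "snd xu"] measurable_sets[OF qm B] by auto
      finally show "{\<omega>\<in>space M. q \<omega> \<in> B \<and> (\<xi> \<omega>, Uv \<omega>) = xu} \<in> events" .
    qed
    also have "\<dots> = (\<Sum>x\<in>Fx. \<Sum>u\<in>Fu. prob {\<omega>\<in>space M. q \<omega> \<in> B \<and> (\<xi> \<omega>, Uv \<omega>) = (x, u)})"
      by (simp add: sum.cartesian_product split_def prod_eq_iff)
    also have "\<dots> = (\<Sum>x\<in>Fx. \<Sum>u\<in>Fu. Pxu x u * measure (nu u) B)"
      using jointq B by (intro sum.cong refl) auto
    finally show ?thesis .
  qed
  have mu_eq: "measure mu B = (\<Sum>u\<in>Fu. Pu u * measure (nu u) B)" if B: "B \<in> sets T" for B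
  proof -
    have "measure mu B = prob (q -` B \<inter> space M)" unfolding mu_def using B by (subst measure_distr) auto
    also have "q -` B \<inter> space M = {\<omega>\<in>space M. q \<omega> \<in> B}" by auto
    also have "prob \<dots> = (\<Sum>x\<in>Fx. \<Sum>u\<in>Fu. Pxu x u * measure (nu u) B)" by (rule qpart[OF B])
    also have "\<dots> = (\<Sum>u\<in>Fu. \<Sum>x\<in>Fx. Pxu x u * measure (nu u) B)" by (rule sum.swap)
    also have "\<dots> = (\<Sum>u\<in>Fu. Pu u * measure (nu u) B)"
      using Pu_sum by (intro sum.cong refl) (simp add: sum_distrib_right)
    finally show ?thesis .
  qed
  define Fp where "Fp = {u\<in>Fu. 0 < Pu u}"
  have finp: "finite Fp" using finu unfolding Fp_def by simp
  have Fp_sub: "Fp \<subseteq> Fu" unfolding Fp_def by auto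
  have Pu_nn: "0 \<le> Pu u" for u unfolding Pu_def by simp
  have Pu_zero: "Pu u = 0" if "u \<in> Fu - Fp" for u using that Pu_nn[of u] unfolding Fp_def by auto
  have nu_sf: "sigma_finite_measure (nu u)" if "u \<in> Fu" for u
    using nu_ps[OF that] by (rule prob_space_imp_sigma_finite)
  have ac: "absolutely_continuous mu (nu u)" if u: "u \<in> Fp" for u
    unfolding absolutely_continuous_def
  proof
    fix B assume B: "B \<in> null_sets mu"
    then have Bs: "B \<in> sets T" using sets_mu by (auto simp: null_sets_def)
    have "measure mu B = 0" using B by (simp add: mu.emeasure_eq_measure null_sets_def)
    then have "(\<Sum>u'\<in>Fu. Pu u' * measure (nu u') B) = 0" using mu_eq[OF Bs] by simp
    then have "\<forall>u'\<in>Fu. Pu u' * measure (nu u') B = 0"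
      using finu Pu_nn by (subst (asm) sum_nonneg_eq_0_iff) (auto intro!: mult_nonneg_nonneg)
    interpret nu: prob_space "nu u" using nu_ps u Fp_sub by auto
    have "measure (nu u) B = 0" using u \<open>\<forall>u'\<in>Fu. Pu u' * measure (nu u') B = 0\<close> unfolding Fp_def by auto
    then show "B \<in> null_sets (nu u)" using Bs sets_nu
      by (simp add: null_sets_def nu.emeasure_eq_measure)
  qed
  define g where "g u = RN_deriv mu (nu u)" for u
  define G where "G u y = enn2real (g u y)" for u y
  have gm[measurable]: "g u \<in> borel_measurable T" for u
  proof -
    have "g u \<in> borel_measurable mu" unfolding g_def by (rule borel_measurable_RN_deriv)
    then show ?thesis using measurable_cong_sets[OF sets_mu refl, of borel] by blast
  qed
  have Gm[measurable]: "G u \<in> borel_measurable T" for u unfolding G_def by measurable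
  have G_nn: "0 \<le> G u y" for u y unfolding G_def by simp
  have dens_G: "density mu (\<lambda>y. ennreal (G u y)) = nu u" if u: "u \<in> Fp" for u
  proof -
    have "density mu (g u) = nu u" unfolding g_def
      using ac[OF u] sets_nu sets_mu by (intro mu.density_RN_deriv) auto
    moreover have "AE y in mu. g u y \<noteq> \<infinity>" unfolding g_def
      using ac[OF u] sets_nu sets_mu nu_sf u Fp_sub by (intro mu.RN_deriv_finite) auto
    then have "density mu (\<lambda>y. ennreal (G u y)) = density mu (g u)"
      unfolding G_def using sets_mu
      by (intro density_cong) (auto simp: less_top measurable_cong_sets[OF sets_mu refl])
    ultimately show ?thesis by simp
  qed
  have space_mu: "space mu = space T" unfolding mu_def by simp
  have space_nu: "space (nu u) = space T" for u unfolding nu_def by simp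
  have G_ind: "(\<integral>y. indicator B y * G u y \<partial>mu) = measure (nu u) B" if u: "u \<in> Fp" and B: "B \<in> sets T" for u B
  proof -
    have "(\<integral>y. indicator B y \<partial>density mu (\<lambda>y. ennreal (G u y))) = (\<integral>y. G u y *\<^sub>R (indicator B y::real) \<partial>mu)"
      using G_nn B sets_mu
      by (intro Bochner_Integration.integral_density[of "indicator B" mu "G u"]) (auto simp: measurable_cong_sets[OF sets_mu refl])
    then have "(\<integral>y. indicator B y \<partial>nu u) = (\<integral>y. G u y * (indicator B y::real) \<partial>mu)" using dens_G[OF u] by simp
    moreover have "(\<integral>y. (indicator B y::real) \<partial>nu u) = measure (nu u) B"
      using B sets.sets_into_space[OF B] space_nu[of u] by (simp add: Int_absorb2)
    ultimately show ?thesis by (simp add: mult.commute)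
  qed
  have G_int: "integrable mu (G u)" if u: "u \<in> Fp" for u
  proof (rule integrableI_nonneg)
    show "G u \<in> borel_measurable mu" using Gm measurable_cong_sets[OF sets_mu refl, of borel] by blast
    show "AE x in mu. 0 \<le> G u x" using G_nn by simp
    have "emeasure (density mu (\<lambda>y. ennreal (G u y))) (space mu) = (\<integral>\<^sup>+y. ennreal (G u y) * indicator (space mu) y \<partial>mu)"
      using \<open>G u \<in> borel_measurable mu\<close> by (intro emeasure_density) auto
    also have "\<dots> = (\<integral>\<^sup>+y. ennreal (G u y) \<partial>mu)" by (intro nn_integral_cong) simp
    finally have "(\<integral>\<^sup>+y. ennreal (G u y) \<partial>mu) = emeasure (nu u) (space mu)" using dens_G[OF u] by simp
    also have "\<dots> < \<infinity>" using nu_ps[of u] u Fp_sub prob_space.emeasure_space_1[of "nu u"] space_mu space_nu[of u] by auto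
    finally show "(\<integral>\<^sup>+y. ennreal (G u y) \<partial>mu) < \<infinity>" .
  qed
  define h where "h y = (\<Sum>u\<in>Fp. Pu u * G u y)" for y
  have hm[measurable]: "h \<in> borel_measurable T" unfolding h_def by measurable
  have h1: "AE y in mu. h y = 1"
  proof (rule density_unique_real)
    show "integrable mu h" unfolding h_def using G_int by (intro Bochner_Integration.integrable_sum integrable_mult_right) auto
    show "integrable mu (\<lambda>_. 1::real)" by simp
    fix A assume A: "A \<in> sets mu"
    then have AT: "A \<in> sets T" using sets_mu by simp
    have GA: "integrable mu (\<lambda>y. Pu u * (indicator A y * G u y))" if "u \<in> Fp" for u
      using integrable_mult_indicator[OF A G_int[OF that]] by (intro integrable_mult_right) simp
    have "(LINT y:A|mu. h y) = (\<integral>y. (\<Sum>u\<in>Fp. Pu u * (indicator A y * G u y)) \<partial>mu)"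
      unfolding set_lebesgue_integral_def h_def
      by (intro Bochner_Integration.integral_cong refl) (simp add: sum_distrib_left mult.left_commute)
    also have "\<dots> = (\<Sum>u\<in>Fp. (\<integral>y. Pu u * (indicator A y * G u y) \<partial>mu))"
      using GA by (rule Bochner_Integration.integral_sum)
    also have "\<dots> = (\<Sum>u\<in>Fp. Pu u * (\<integral>y. indicator A y * G u y \<partial>mu))" by simp
    also have "\<dots> = (\<Sum>u\<in>Fp. Pu u * measure (nu u) A)" using G_ind AT by simp
    also have "\<dots> = (\<Sum>u\<in>Fu. Pu u * measure (nu u) A)"
      using Fp_sub finu Pu_zero by (intro sum.mono_neutral_left) auto
    also have "\<dots> = measure mu A" using mu_eq[OF AT] by simp
    also have "\<dots> = (LINT y:A|mu. 1)" using A by (simp add: set_lebesgue_integral_def)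
    finally show "(LINT y:A|mu. h y) = (LINT y:A|mu. 1)" .
  qed
  define kap where "kap x u = (\<Sum>x'\<in>Fx. indicator {x'} x * (Pxu x' u / Px x'))" for x u
  have kap_eq: "kap x u = Pxu x u / Px x" if x: "x \<in> Fx" for x u
  proof -
    have "kap x u = (\<Sum>x'\<in>Fx. if x' = x then Pxu x' u / Px x' else 0)"
      unfolding kap_def by (intro sum.cong) (auto simp: indicator_def)
    also have "\<dots> = Pxu x u / Px x" using finx x by simp
    finally show ?thesis .
  qed
  have Px_nn: "0 \<le> Px x" for x unfolding Px_def by simp
  have kap_nn: "0 \<le> kap x u" for x u
    unfolding kap_def using Pxu_nn Px_nn by (intro sum_nonneg mult_nonneg_nonneg divide_nonneg_nonneg) auto
  have kapm[measurable]: "(\<lambda>x. kap x u) \<in> borel_measurable S" for u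
    unfolding kap_def using xs by (intro borel_measurable_sum borel_measurable_times borel_measurable_indicator) auto
  have Px_kap: "Px x * kap x u = Pxu x u" if x: "x \<in> Fx" for x u
  proof (cases "Px x = 0")
    case True
    then have "Pxu x u = 0" using Pxu_le_Px[OF x, of u] Pxu_nn[of x u] by simp
    then show ?thesis using True by simp
  qed (simp add: kap_eq[OF x])
  define F where "F z = (\<Sum>u\<in>Fp. kap (fst z) u * G u (snd z))" for z
  have Fm[measurable]: "F \<in> borel_measurable (S \<Otimes>\<^sub>M T)" unfolding F_def by measurable
  have F_nn: "0 \<le> F z" for z unfolding F_def using kap_nn G_nn by (intro sum_nonneg mult_nonneg_nonneg) auto
  define Q where "Q = distr M (S \<Otimes>\<^sub>M T) (\<lambda>\<omega>. (\<xi> \<omega>, q \<omega>))"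
  define P where "P = Dx \<Otimes>\<^sub>M mu"
  have sets_P: "sets P = sets (S \<Otimes>\<^sub>M T)" unfolding P_def Dx_def
    by (intro sets_pair_measure_cong) (simp_all add: sets_mu)
  have sets_Q: "sets Q = sets (S \<Otimes>\<^sub>M T)" unfolding Q_def by simp
  have Fm': "F \<in> borel_measurable P" using Fm measurable_cong_sets[OF sets_P refl, of borel] by blast
  have mu_sf: "sigma_finite_measure mu" by (rule prob_space_imp_sigma_finite) (rule mu.prob_space_axioms)
  have Ex: "Pair x -` E \<inter> space T \<in> sets T" if "E \<in> sets (S \<Otimes>\<^sub>M T)" "x \<in> space S" for x E
    by (intro sets.Int sets_Pair1[OF that(1)] sets.top)
  have inner: "(\<integral>\<^sup>+y. ennreal (F (x, y)) * indicator E (x, y) \<partial>mu) =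
      ennreal (\<Sum>u\<in>Fp. kap x u * measure (nu u) (Pair x -` E \<inter> space T))"
    if x: "x \<in> Fx" and E: "E \<in> sets (S \<Otimes>\<^sub>M T)" for x E
  proof -
    define Ex where "Ex = Pair x -` E \<inter> space T"
    have ExT: "Ex \<in> sets T" unfolding Ex_def using Ex[OF E] xs[OF x] sets.sets_into_space[OF xs[OF x]] by auto
    have "(\<integral>\<^sup>+y. ennreal (F (x, y)) * indicator E (x, y) \<partial>mu) =
        (\<integral>\<^sup>+y. (\<Sum>u\<in>Fp. ennreal (kap x u) * (ennreal (G u y) * indicator Ex y)) \<partial>mu)"
    proof (rule nn_integral_cong)
      fix y assume y: "y \<in> space mu"
      have "ennreal (F (x, y)) = (\<Sum>u\<in>Fp. ennreal (kap x u) * ennreal (G u y))"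
        unfolding F_def using kap_nn G_nn by (simp add: ennreal_mult sum_ennreal[symmetric] del: sum_ennreal)
      moreover have "indicator E (x, y) = (indicator Ex y :: ennreal)"
        using y space_mu unfolding Ex_def by (simp add: indicator_def)
      ultimately show "ennreal (F (x, y)) * indicator E (x, y) = (\<Sum>u\<in>Fp. ennreal (kap x u) * (ennreal (G u y) * indicator Ex y))"
        by (simp add: sum_distrib_right mult.assoc)
    qed
    also have "\<dots> = (\<Sum>u\<in>Fp. ennreal (kap x u) * (\<integral>\<^sup>+y. ennreal (G u y) * indicator Ex y \<partial>mu))"
      using ExT by (subst nn_integral_sum) (auto simp: nn_integral_cmult measurable_cong_sets[OF sets_mu refl])
    also have "\<dots> = (\<Sum>u\<in>Fp. ennreal (kap x u) * emeasure (nu u) Ex)"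
    proof (intro sum.cong refl arg_cong2[where f="(*)"])
      fix u assume u: "u \<in> Fp"
      have "emeasure (density mu (\<lambda>y. ennreal (G u y))) Ex = (\<integral>\<^sup>+y. ennreal (G u y) * indicator Ex y \<partial>mu)"
        using ExT by (intro emeasure_density) (auto simp: measurable_cong_sets[OF sets_mu refl] sets_mu)
      then show "(\<integral>\<^sup>+y. ennreal (G u y) * indicator Ex y \<partial>mu) = emeasure (nu u) Ex" using dens_G[OF u] by simp
    qed
    also have "\<dots> = (\<Sum>u\<in>Fp. ennreal (kap x u * measure (nu u) Ex))"
    proof (intro sum.cong refl)
      fix u assume u: "u \<in> Fp"
      interpret nu: prob_space "nu u" using nu_ps u Fp_sub by auto
      show "ennreal (kap x u) * emeasure (nu u) Ex = ennreal (kap x u * measure (nu u) Ex)"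
        using kap_nn by (simp add: nu.emeasure_eq_measure ennreal_mult)
    qed
    also have "\<dots> = ennreal (\<Sum>u\<in>Fp. kap x u * measure (nu u) Ex)"
      using kap_nn by (intro sum_ennreal) (auto intro: mult_nonneg_nonneg)
    finally show ?thesis unfolding Ex_def .
  qed
  have Pxu_zero: "Pxu x u = 0" if "u \<in> Fu - Fp" for x u
    using Pxu_le_Pu[of u x] Pxu_nn[of x u] Pu_zero[OF that] that by auto
  have probE: "prob {\<omega>\<in>space M. (\<xi> \<omega>, q \<omega>) \<in> E} =
      (\<Sum>x\<in>Fx. \<Sum>u\<in>Fp. Pxu x u * measure (nu u) (Pair x -` E \<inter> space T))"
    if E: "E \<in> sets (S \<Otimes>\<^sub>M T)" for E
  proof -
    have "prob {\<omega>\<in>space M. (\<xi> \<omega>, q \<omega>) \<in> E} = (\<Sum>xu\<in>Fx \<times> Fu. prob {\<omega>\<in>space M. (\<xi> \<omega>, q \<omega>) \<in> E \<and> (\<xi> \<omega>, Uv \<omega>) = xu})"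
    proof (rule prob_partition)
      show "finite (Fx \<times> Fu)" using finx finu by simp
      show "\<And>\<omega>. \<omega> \<in> space M \<Longrightarrow> (\<xi> \<omega>, Uv \<omega>) \<in> Fx \<times> Fu" using xv uv by auto
      fix xu assume xu: "xu \<in> Fx \<times> Fu"
      have m: "(\<lambda>\<omega>. (\<xi> \<omega>, q \<omega>)) \<in> measurable M (S \<Otimes>\<^sub>M T)" by measurable
      have "{\<omega>\<in>space M. (\<xi> \<omega>, q \<omega>) \<in> E \<and> (\<xi> \<omega>, Uv \<omega>) = xu} = ((\<lambda>\<omega>. (\<xi> \<omega>, q \<omega>)) -` E \<inter> space M) \<inter> {\<omega>\<in>space M. \<xi> \<omega> = fst xu \<and> Uv \<omega> = snd xu}"
        by (cases xu) auto
      also have "\<dots> \<in> events" using xu exu[of "fst xu" "snd xu"] measurable_sets[OF m E] by auto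
      finally show "{\<omega>\<in>space M. (\<xi> \<omega>, q \<omega>) \<in> E \<and> (\<xi> \<omega>, Uv \<omega>) = xu} \<in> events" .
    qed
    also have "\<dots> = (\<Sum>x\<in>Fx. \<Sum>u\<in>Fu. prob {\<omega>\<in>space M. (\<xi> \<omega>, q \<omega>) \<in> E \<and> (\<xi> \<omega>, Uv \<omega>) = (x, u)})"
      by (simp add: sum.cartesian_product split_def prod_eq_iff)
    also have "\<dots> = (\<Sum>x\<in>Fx. \<Sum>u\<in>Fu. prob {\<omega>\<in>space M. q \<omega> \<in> Pair x -` E \<inter> space T \<and> (\<xi> \<omega>, Uv \<omega>) = (x, u)})"
      using measurable_space[OF qm] by (intro sum.cong refl arg_cong[where f=prob]) auto
    also have "\<dots> = (\<Sum>x\<in>Fx. \<Sum>u\<in>Fu. Pxu x u * measure (nu u) (Pair x -` E \<inter> space T))"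
    proof (intro sum.cong refl)
      fix x u assume x: "x \<in> Fx" and u: "u \<in> Fu"
      have "x \<in> space S" using sets.sets_into_space[OF xs[OF x]] by auto
      from jointq[OF x u Ex[OF E this]]
      show "prob {\<omega>\<in>space M. q \<omega> \<in> Pair x -` E \<inter> space T \<and> (\<xi> \<omega>, Uv \<omega>) = (x, u)} = Pxu x u * measure (nu u) (Pair x -` E \<inter> space T)" .
    qed
    also have "\<dots> = (\<Sum>x\<in>Fx. \<Sum>u\<in>Fp. Pxu x u * measure (nu u) (Pair x -` E \<inter> space T))"
      using Fp_sub finu Pxu_zero by (intro sum.cong refl sum.mono_neutral_right) auto
    finally show ?thesis .
  qed
  have sets_Smu: "sets (S \<Otimes>\<^sub>M mu) = sets (S \<Otimes>\<^sub>M T)"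
    by (intro sets_pair_measure_cong) (simp_all add: sets_mu)
  have dens: "density P (\<lambda>z. ennreal (F z)) = Q"
  proof (rule measure_eqI)
    show "sets (density P (\<lambda>z. ennreal (F z))) = sets Q" using sets_P sets_Q by simp
    fix E assume "E \<in> sets (density P (\<lambda>z. ennreal (F z)))"
    then have E: "E \<in> sets (S \<Otimes>\<^sub>M T)" using sets_P by simp
    have "(\<lambda>z. ennreal (F z) * indicator E z) \<in> borel_measurable (S \<Otimes>\<^sub>M T)"
      using E by measurable
    then have Hm: "(\<lambda>z. ennreal (F z) * indicator E z) \<in> borel_measurable (S \<Otimes>\<^sub>M mu)"
      using measurable_cong_sets[OF sets_Smu refl, of borel] by blast
    have "emeasure (density P (\<lambda>z. ennreal (F z))) E = (\<integral>\<^sup>+z. ennreal (F z) * indicator E z \<partial>P)"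
      using E sets_P Fm' by (intro emeasure_density) auto
    also have "\<dots> = (\<Sum>x\<in>Fx. ennreal (Px x) * (\<integral>\<^sup>+y. ennreal (F (x, y)) * indicator E (x, y) \<partial>mu))"
      unfolding P_def Dx_def Px_def
      by (rule nn_integral_pair_fv[OF xi finx xv ex mu_sf Hm])
    also have "\<dots> = (\<Sum>x\<in>Fx. ennreal (Px x) * ennreal (\<Sum>u\<in>Fp. kap x u * measure (nu u) (Pair x -` E \<inter> space T)))"
      using inner E by simp
    also have "\<dots> = (\<Sum>x\<in>Fx. ennreal (\<Sum>u\<in>Fp. Pxu x u * measure (nu u) (Pair x -` E \<inter> space T)))"
    proof (intro sum.cong refl)
      fix x assume x: "x \<in> Fx"
      have "Px x * (\<Sum>u\<in>Fp. kap x u * measure (nu u) (Pair x -` E \<inter> space T)) = (\<Sum>u\<in>Fp. Pxu x u * measure (nu u) (Pair x -` E \<inter> space T))"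
        by (simp add: sum_distrib_left mult.assoc[symmetric] Px_kap[OF x])
      then show "ennreal (Px x) * ennreal (\<Sum>u\<in>Fp. kap x u * measure (nu u) (Pair x -` E \<inter> space T)) = ennreal (\<Sum>u\<in>Fp. Pxu x u * measure (nu u) (Pair x -` E \<inter> space T))"
        using ennreal_mult'[OF Px_nn[of x], of "\<Sum>u\<in>Fp. kap x u * measure (nu u) (Pair x -` E \<inter> space T)"] by simp
    qed
    also have "\<dots> = ennreal (\<Sum>x\<in>Fx. \<Sum>u\<in>Fp. Pxu x u * measure (nu u) (Pair x -` E \<inter> space T))"
      using Pxu_nn by (intro sum_ennreal) (auto intro!: sum_nonneg mult_nonneg_nonneg)
    also have "\<dots> = ennreal (prob {\<omega>\<in>space M. (\<xi> \<omega>, q \<omega>) \<in> E})" using probE[OF E] by simp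
    also have "\<dots> = emeasure Q E"
    proof -
      have m: "(\<lambda>\<omega>. (\<xi> \<omega>, q \<omega>)) \<in> measurable M (S \<Otimes>\<^sub>M T)" by measurable
      have "emeasure Q E = emeasure M ((\<lambda>\<omega>. (\<xi> \<omega>, q \<omega>)) -` E \<inter> space M)"
        unfolding Q_def using emeasure_distr[OF m E] by simp
      also have "(\<lambda>\<omega>. (\<xi> \<omega>, q \<omega>)) -` E \<inter> space M = {\<omega>\<in>space M. (\<xi> \<omega>, q \<omega>) \<in> E}" by auto
      finally show ?thesis by (simp add: emeasure_eq_measure)
    qed
    finally show "emeasure (density P (\<lambda>z. ennreal (F z))) E = emeasure Q E" .
  qed
  interpret Pps: prob_space P unfolding P_def
    by (rule prob_space_pair) (rule Dx.prob_space_axioms, rule mu.prob_space_axioms)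
  interpret DM: pair_prob_space Dx mu ..
  have Fme: "(\<lambda>z. ennreal (F z)) \<in> borel_measurable P" using Fm' by measurable
  have RN: "AE z in P. ennreal (F z) = RN_deriv P Q z"
    by (rule Pps.RN_deriv_unique[OF Fme dens])
  have MI: "mutual_information b S T \<xi> q = KL_divergence b P Q"
    unfolding mutual_information_def P_def Q_def Dx_def mu_def by simp
  have ed_m: "entropy_density b P Q \<in> borel_measurable Q"
    using measurable_entropy_density[of b P Q] measurable_cong_sets[OF trans[OF sets_P sets_Q[symmetric]] refl, of borel] by blast
  have lF_m: "(\<lambda>z. log b (F z)) \<in> borel_measurable Q"
  proof -
    have "(\<lambda>z. log b (F z)) \<in> borel_measurable (S \<Otimes>\<^sub>M T)" by measurable
    then show ?thesis using measurable_cong_sets[OF sets_Q refl, of borel] by blast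
  qed
  have KL: "KL_divergence b P Q = (\<integral>z. F z * log b (F z) \<partial>P)"
  proof -
    have "AE z in P. 0 < ennreal (F z) \<longrightarrow> entropy_density b P Q z = log b (F z)"
    proof (rule AE_mp[OF RN], rule AE_I2, intro impI)
      fix z assume "ennreal (F z) = RN_deriv P Q z"
      then have "enn2real (RN_deriv P Q z) = F z" using F_nn[of z] by (metis enn2real_ennreal)
      then show "entropy_density b P Q z = log b (F z)" by (simp add: entropy_density_def)
    qed
    then have "AE z in Q. entropy_density b P Q z = log b (F z)"
      unfolding dens[symmetric] using Fme by (subst AE_density) auto
    then have "KL_divergence b P Q = (\<integral>z. log b (F z) \<partial>Q)"
      unfolding KL_divergence_def using ed_m lF_m by (intro integral_cong_AE) auto
    also have "\<dots> = (\<integral>z. log b (F z) \<partial>density P (\<lambda>z. ennreal (F z)))" using dens by simp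
    also have "\<dots> = (\<integral>z. F z *\<^sub>R log b (F z) \<partial>P)"
      using Fm' F_nn lF_m measurable_cong_sets[OF trans[OF sets_P sets_Q[symmetric]] refl, of borel]
      by (intro Bochner_Integration.integral_density) auto
    finally show ?thesis by simp
  qed
  define R where "R z = (\<Sum>u\<in>Fp. kap (fst z) u * G u (snd z) * log b (kap (fst z) u / Pu u))" for z
  have Rm[measurable]: "R \<in> borel_measurable (S \<Otimes>\<^sub>M T)" unfolding R_def by measurable
  have G1: "(\<integral>y. G u y \<partial>mu) = 1" if u: "u \<in> Fp" for u
  proof -
    have "(\<integral>y. G u y \<partial>mu) = (\<integral>y. indicator (space T) y * G u y \<partial>mu)"
      by (intro Bochner_Integration.integral_cong refl) (simp add: space_mu)
    also have "\<dots> = measure (nu u) (space T)" by (rule G_ind[OF u sets.top])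
    also have "\<dots> = 1" using nu_ps[of u] u Fp_sub space_nu[of u] prob_space.prob_space[of "nu u"] by auto
    finally show ?thesis .
  qed
  have R_int_x: "integrable mu (\<lambda>y. R (x, y))" for x
    unfolding R_def using G_int
    by (intro Bochner_Integration.integrable_sum) (auto intro!: integrable_mult_left integrable_mult_right)
  have R_x: "(\<integral>y. R (x, y) \<partial>mu) = (\<Sum>u\<in>Fp. kap x u * log b (kap x u / Pu u))" for x
  proof -
    have "(\<integral>y. R (x, y) \<partial>mu) = (\<Sum>u\<in>Fp. (\<integral>y. (kap x u * log b (kap x u / Pu u)) * G u y \<partial>mu))"
      unfolding R_def using G_int
      by (subst Bochner_Integration.integral_sum[symmetric]) (auto intro!: integrable_mult_right Bochner_Integration.integral_cong simp: mult_ac)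
    also have "\<dots> = (\<Sum>u\<in>Fp. kap x u * log b (kap x u / Pu u))" using G1 by simp
    finally show ?thesis .
  qed
  have Rm': "R \<in> borel_measurable (S \<Otimes>\<^sub>M mu)" using Rm measurable_cong_sets[OF sets_Smu refl, of borel] by blast
  have R_int: "integrable P R" and R_integral: "(\<integral>z. R z \<partial>P) = (\<Sum>x\<in>Fx. Px x * (\<Sum>u\<in>Fp. kap x u * log b (kap x u / Pu u)))"
    using integral_pair_fv[OF xi finx xv xs mu_sf Rm' R_int_x] unfolding P_def Dx_def Px_def R_x by auto
  have R_val: "(\<Sum>x\<in>Fx. Px x * (\<Sum>u\<in>Fp. kap x u * log b (kap x u / Pu u))) =
      (\<Sum>x\<in>Fx. \<Sum>u\<in>Fu. Pxu x u * log b (Pxu x u / (Px x * Pu u)))"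
  proof (intro sum.cong refl)
    fix x assume x: "x \<in> Fx"
    have "Px x * (\<Sum>u\<in>Fp. kap x u * log b (kap x u / Pu u)) = (\<Sum>u\<in>Fp. Pxu x u * log b (Pxu x u / (Px x * Pu u)))"
      unfolding sum_distrib_left
    proof (intro sum.cong refl)
      fix u assume u: "u \<in> Fp"
      show "Px x * (kap x u * log b (kap x u / Pu u)) = Pxu x u * log b (Pxu x u / (Px x * Pu u))"
      proof (cases "Px x = 0")
        case True
        then have "Pxu x u = 0" using Pxu_le_Px[OF x, of u] Pxu_nn[of x u] by simp
        then show ?thesis using True by simp
      next
        case False
        have "kap x u / Pu u = Pxu x u / (Px x * Pu u)" using kap_eq[OF x, of u] by simp
        moreover have "Px x * (kap x u * log b (kap x u / Pu u)) = (Px x * kap x u) * log b (kap x u / Pu u)" by simp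
        ultimately show ?thesis using Px_kap[OF x, of u] by simp
      qed
    qed
    also have "\<dots> = (\<Sum>u\<in>Fu. Pxu x u * log b (Pxu x u / (Px x * Pu u)))"
      using Fp_sub finu Pxu_zero by (intro sum.mono_neutral_left) auto
    finally show "Px x * (\<Sum>u\<in>Fp. kap x u * log b (kap x u / Pu u)) = (\<Sum>u\<in>Fu. Pxu x u * log b (Pxu x u / (Px x * Pu u)))" .
  qed
  have AEh: "AE z in P. h (snd z) = 1"
  proof -
    have "(\<lambda>z. h (snd z)) \<in> borel_measurable (S \<Otimes>\<^sub>M T)" by measurable
    then have hsm: "(\<lambda>z. h (snd z)) \<in> borel_measurable P" using measurable_cong_sets[OF sets_P refl, of borel] by blast
    have "{z \<in> space (Dx \<Otimes>\<^sub>M mu). h (snd z) = 1} = (\<lambda>z. h (snd z)) -` {1} \<inter> space P" unfolding P_def by auto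
    also have "\<dots> \<in> sets P" using hsm by (rule measurable_sets) simp
    finally have "{z \<in> space (Dx \<Otimes>\<^sub>M mu). h (snd z) = 1} \<in> sets (Dx \<Otimes>\<^sub>M mu)" unfolding P_def .
    then show ?thesis unfolding P_def using h1
      by (intro DM.AE_pair_measure) auto
  qed
  have AEle: "AE z in P. F z * log b (F z) \<le> R z"
    using AEh
  proof eventually_elim
    case (elim z)
    have "(\<Sum>u\<in>Fp. kap (fst z) u * G u (snd z)) * log b (\<Sum>u\<in>Fp. kap (fst z) u * G u (snd z))
        \<le> (\<Sum>u\<in>Fp. kap (fst z) u * G u (snd z) * log b (kap (fst z) u / Pu u))"
      using elim finp b kap_nn G_nn unfolding h_def
      by (intro log_sum_ineq) (auto simp: Fp_def)
    then show ?case unfolding F_def R_def .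
  qed
  show ?thesis
  proof (cases "integrable P (\<lambda>z. F z * log b (F z))")
    case False
    then have "mutual_information b S T \<xi> q = 0" unfolding MI KL by (rule not_integrable_integral_eq)
    then show ?thesis by simp
  next
    case True
    have "mutual_information b S T \<xi> q \<le> (\<integral>z. R z \<partial>P)"
      unfolding MI KL using True R_int AEle by (rule integral_mono_AE)
    then have "mutual_information b S T \<xi> q \<le> (\<Sum>x\<in>Fx. \<Sum>u\<in>Fu. Pxu x u * log b (Pxu x u / (Px x * Pu u)))"
      using R_integral R_val by simp
    then show ?thesis unfolding Pxu_def Px_def Pu_def by simp
  qed
qed


lemma log_prod_pos:
  fixes f :: "'i \<Rightarrow> real"
  assumes "finite I" "\<And>i. i \<in> I \<Longrightarrow> 0 < f i"
  shows "log b (\<Prod>i\<in>I. f i) = (\<Sum>i\<in>I. log b (f i))"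
proof -
  have "ln (\<Prod>i\<in>I. f i) = (\<Sum>i\<in>I. ln (f i))" using assms by (intro ln_prod) force+
  then show ?thesis by (simp add: log_def sum_divide_distrib)
qed

theorem theorem2:
  fixes \<Omega> :: "'w measure"
    and M K N :: nat
    and p :: "nat \<Rightarrow> real"
    and \<sigma> \<beta> :: real
    and X :: "nat \<Rightarrow> nat \<Rightarrow> 'w \<Rightarrow> real"
    and Y :: "nat \<Rightarrow> nat \<Rightarrow> 'w \<Rightarrow> real"
    and Z :: "nat \<Rightarrow> nat \<Rightarrow> 'w \<Rightarrow> real"
  assumes P: "prob_space \<Omega>"
    and M2: "M \<ge> 2"
    and sigma_pos: "\<sigma> > 0"
    and beta: "0 < \<beta>" "\<beta> < 1"
    and p_range: "\<And>n. n \<in> {1..N} \<Longrightarrow> 0 \<le> p n \<and> p n \<le> 1"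
    and X_vals: "\<And>m n \<omega>. m \<in> {1..M} \<Longrightarrow> n \<in> {1..N} \<Longrightarrow> \<omega> \<in> space \<Omega> \<Longrightarrow> X m n \<omega> \<in> {-1, 1}"
    and X_prob: "\<And>m n. m \<in> {1..M} \<Longrightarrow> n \<in> {1..N} \<Longrightarrow>
                   measure \<Omega> {\<omega> \<in> space \<Omega>. X m n \<omega> = 1} = p n"
    and Y_vals: "\<And>k n \<omega>. k \<in> {1..K} \<Longrightarrow> n \<in> {1..N} \<Longrightarrow> \<omega> \<in> space \<Omega> \<Longrightarrow> Y k n \<omega> \<in> {-1, 1}"
    and Y_prob: "\<And>k n. k \<in> {1..K} \<Longrightarrow> n \<in> {1..N} \<Longrightarrow>
                   measure \<Omega> {\<omega> \<in> space \<Omega>. Y k n \<omega> = 1} = p n"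
    and Z_normal: "\<And>s n. s \<in> {1..M} \<Longrightarrow> n \<in> {1..N} \<Longrightarrow>
                   distributed \<Omega> lborel (Z s n) (\<lambda>x. ennreal (normal_density 0 \<sigma> x))"
    and indep: "\<And>s. s \<in> {1..M} \<Longrightarrow>
       prob_space.indep_vars \<Omega> (\<lambda>_. borel)
         (\<lambda>i. case i of Xi m n \<Rightarrow> X m n | Yi k n \<Rightarrow> Y k n | Zi n \<Rightarrow> Z s n)
         ({Xi m n | m n. m \<in> {1..M} \<and> n \<in> {1..N}}
          \<union> {Yi k n | k n. k \<in> {1..K} \<and> n \<in> {1..N}}
          \<union> {Zi n | n. n \<in> {1..N}})"
    and hyp: "\<And>n. n \<in> {1..N} \<Longrightarrow>
       (binom_entropy (M - 1 + K) (p n) - binom_entropy K (p n)) / real (M - 1) \<le> \<beta>"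
  shows "\<forall>s \<in> {1..M}.
     prob_space.mutual_information \<Omega> 2
        (PiM (({1..M} - {s}) \<times> {1..N}) (\<lambda>_. borel))
        (PiM {1..N} (\<lambda>_. borel))
        (\<lambda>\<omega>. \<lambda>(m, n) \<in> ({1..M} - {s}) \<times> {1..N}. X m n \<omega>)
        (\<lambda>\<omega>. \<lambda>n \<in> {1..N}.
            (\<Sum>m \<in> {1..M} - {s}. X m n \<omega>) + (\<Sum>k \<in> {1..K}. Y k n \<omega>) + Z s n \<omega>)
      / (real (card ({1..M} - {s})) * real N) \<le> \<beta>"
proof
  fix s assume s: "s \<in> {1..M}"
  interpret prob_space \<Omega> by (rule P)
  define As where "As = {1..M} - {s}"
  define Ns where "Ns = {1..N}"
  define Aset where "Aset = As \<times> Ns"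
  define Lc where "Lc = M - 1 + K"
  define V where "V = (\<lambda>i. case i of Xi m n \<Rightarrow> X m n | Yi k n \<Rightarrow> Y k n | Zi n \<Rightarrow> Z s n)"
  define I where "I = ({Xi m n | m n. m \<in> {1..M} \<and> n \<in> {1..N}}
          \<union> {Yi k n | k n. k \<in> {1..K} \<and> n \<in> {1..N}} \<union> {Zi n | n. n \<in> {1..N}})"
  have indV: "indep_vars (\<lambda>_. borel) V I" using indep[OF s] unfolding V_def I_def .
  have rvV: "V i \<in> borel_measurable \<Omega>" if "i \<in> I" for i using indV that unfolding indep_vars_def by auto
  have As_sub: "As \<subseteq> {1..M}" unfolding As_def by auto
  have rvX: "X m n \<in> borel_measurable \<Omega>" if "m \<in> As" "n \<in> Ns" for m n
    using rvV[of "Xi m n"] that As_sub unfolding I_def V_def Ns_def by auto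
  have rvY: "Y k n \<in> borel_measurable \<Omega>" if "k \<in> {1..K}" "n \<in> Ns" for k n
    using rvV[of "Yi k n"] that unfolding I_def V_def Ns_def by auto
  have rvZ: "Z s n \<in> borel_measurable \<Omega>" if "n \<in> Ns" for n
    using rvV[of "Zi n"] that unfolding I_def V_def Ns_def by auto
  have cardAs: "card As = M - 1" using s by (simp add: As_def card_Diff_singleton)
  have finAs: "finite As" unfolding As_def by simp
  have finNs: "finite Ns" unfolding Ns_def by simp
  define \<xi> where "\<xi> = (\<lambda>\<omega>. \<lambda>(m, n) \<in> Aset. X m n \<omega>)"
  define qv where "qv = (\<lambda>\<omega>. \<lambda>n \<in> Ns. (\<Sum>m \<in> As. X m n \<omega>) + (\<Sum>k \<in> {1..K}. Y k n \<omega>) + Z s n \<omega>)"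
  define MI where "MI = mutual_information 2 (PiM Aset (\<lambda>_. borel)) (PiM Ns (\<lambda>_. borel)) \<xi> qv"
  have goal_eq: "prob_space.mutual_information \<Omega> 2
        (PiM (({1..M} - {s}) \<times> {1..N}) (\<lambda>_. borel))
        (PiM {1..N} (\<lambda>_. borel))
        (\<lambda>\<omega>. \<lambda>(m, n) \<in> ({1..M} - {s}) \<times> {1..N}. X m n \<omega>)
        (\<lambda>\<omega>. \<lambda>n \<in> {1..N}.
            (\<Sum>m \<in> {1..M} - {s}. X m n \<omega>) + (\<Sum>k \<in> {1..K}. Y k n \<omega>) + Z s n \<omega>) = MI"
    unfolding MI_def \<xi>_def qv_def Aset_def As_def Ns_def ..
  have "MI / (real (card As) * real N) \<le> \<beta>"
  proof (cases "N = 0")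
    case True then show ?thesis using beta by simp
  next
    case False
    have main: "MI \<le> real N * (real (M - 1) * \<beta>)" 
    proof -
      define Vals where "Vals = (\<lambda>k. 2 * real k - real Lc) ` {0..Lc}"
      define Fx where "Fx = PiE Aset (\<lambda>_. {-1, 1::real})"
      define Fu where "Fu = PiE Ns (\<lambda>_. Vals)"
      define W where "W n \<omega> = (\<Sum>k\<in>{1..K}. Y k n \<omega>)" for n \<omega>
      define Sx where "Sx n \<omega> = (\<Sum>m\<in>As. X m n \<omega>)" for n \<omega>
      define Uv where "Uv \<omega> = (\<lambda>n\<in>Ns. Sx n \<omega> + W n \<omega>)" for \<omega>
      define Zv where "Zv \<omega> = (\<lambda>n\<in>Ns. Z s n \<omega>)" for \<omega>
      define addf where "addf u z = (\<lambda>n\<in>Ns. u n + z n)" for u z :: "nat \<Rightarrow> real"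
      define JW where "JW n = (\<lambda>k. Yi k n) ` {1..K}" for n
      define JU where "JU n = (\<lambda>m. Xi m n) ` As \<union> (\<lambda>k. Yi k n) ` {1..K}" for n
      have finJW: "finite (JW n)" for n unfolding JW_def by simp
      have finJU: "finite (JU n)" for n unfolding JU_def using finAs by simp
      have cardJW: "card (JW n) = K" for n unfolding JW_def by (subst card_image) (auto simp: inj_on_def)
      have cardJU: "card (JU n) = Lc" for n
      proof -
        have "card (JU n) = card ((\<lambda>m. Xi m n) ` As) + card ((\<lambda>k. Yi k n) ` {1..K})"
          unfolding JU_def using finAs by (intro card_Un_disjoint) auto
        also have "\<dots> = card As + K" by (subst card_image, simp add: inj_on_def)+ simp
        finally show ?thesis using cardAs unfolding Lc_def by simp
      qed
      have sumW: "(\<Sum>i\<in>JW n. V i \<omega>) = W n \<omega>" for n \<omega>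
        unfolding JW_def W_def V_def by (subst sum.reindex) (auto simp: inj_on_def)
      have sumU: "(\<Sum>i\<in>JU n. V i \<omega>) = Sx n \<omega> + W n \<omega>" for n \<omega>
      proof -
        have "(\<Sum>i\<in>JU n. V i \<omega>) = (\<Sum>i\<in>(\<lambda>m. Xi m n) ` As. V i \<omega>) + (\<Sum>i\<in>(\<lambda>k. Yi k n) ` {1..K}. V i \<omega>)"
          unfolding JU_def using finAs by (intro sum.union_disjoint) auto
        also have "(\<Sum>i\<in>(\<lambda>m. Xi m n) ` As. V i \<omega>) = Sx n \<omega>"
          unfolding Sx_def V_def by (subst sum.reindex) (auto simp: inj_on_def)
        also have "(\<Sum>i\<in>(\<lambda>k. Yi k n) ` {1..K}. V i \<omega>) = W n \<omega>" using sumW unfolding JW_def .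
        finally show ?thesis .
      qed
      have JW_I: "JW n \<subseteq> I" if "n \<in> Ns" for n using that unfolding JW_def I_def Ns_def by auto
      have JU_I: "JU n \<subseteq> I" if "n \<in> Ns" for n using that As_sub unfolding JU_def I_def Ns_def by auto
      have JU_cases: "(\<exists>m\<in>{1..M}. i = Xi m n) \<or> (\<exists>k\<in>{1..K}. i = Yi k n)" if "i \<in> JU n" for i n
        using that As_sub unfolding JU_def by auto
      have V_vals: "V i \<omega> \<in> {-1, 1}" if "i \<in> JU n" "n \<in> Ns" "\<omega> \<in> space \<Omega>" for i n \<omega>
        using JU_cases[OF that(1)]
      proof (elim disjE bexE)
        fix m assume m: "m \<in> {1..M}" "i = Xi m n"
        then show ?thesis using X_vals[OF m(1) _ that(3)] that(2) unfolding V_def Ns_def by simp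
      next
        fix k assume k: "k \<in> {1..K}" "i = Yi k n"
        then show ?thesis using Y_vals[OF k(1) _ that(3)] that(2) unfolding V_def Ns_def by simp
      qed
      have V_prob: "prob {\<omega>\<in>space \<Omega>. V i \<omega> = 1} = p n" if "i \<in> JU n" "n \<in> Ns" for i n
        using JU_cases[OF that(1)]
      proof (elim disjE bexE)
        fix m assume m: "m \<in> {1..M}" "i = Xi m n"
        then show ?thesis using X_prob[OF m(1)] that(2) unfolding V_def Ns_def by simp
      next
        fix k assume k: "k \<in> {1..K}" "i = Yi k n"
        then show ?thesis using Y_prob[OF k(1)] that(2) unfolding V_def Ns_def by simp
      qed
      have JW_JU: "JW n \<subseteq> JU n" for n unfolding JW_def JU_def by auto
      have pn: "0 \<le> p n" "p n \<le> 1" if "n \<in> Ns" for n using p_range that unfolding Ns_def by auto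
      have Uv_vals: "Sx n \<omega> + W n \<omega> \<in> Vals" if "n \<in> Ns" "\<omega> \<in> space \<Omega>" for n \<omega>
        using pm1_sum_vals[of "JU n" "\<lambda>i. V i \<omega>"] finJU V_vals[OF _ that] sumU cardJU unfolding Vals_def by auto
      have finAset: "finite Aset" unfolding Aset_def using finAs finNs by simp
      have finVals: "finite Vals" unfolding Vals_def by simp
      have xi_m: "\<xi> \<in> measurable \<Omega> (PiM Aset (\<lambda>_. borel))"
        unfolding \<xi>_def
      proof (rule measurable_restrict)
        fix i assume "i \<in> Aset"
        then obtain m n where i: "i = (m, n)" "m \<in> As" "n \<in> Ns" unfolding Aset_def by auto
        show "(\<lambda>\<omega>. case i of (m, n) \<Rightarrow> X m n \<omega>) \<in> measurable \<Omega> borel" using rvX[OF i(2,3)] i(1) by simp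
      qed
      have Uv_m: "Uv \<in> measurable \<Omega> (PiM Ns (\<lambda>_. borel))"
        unfolding Uv_def
      proof (rule measurable_restrict)
        fix n assume n: "n \<in> Ns"
        show "(\<lambda>\<omega>. Sx n \<omega> + W n \<omega>) \<in> measurable \<Omega> borel"
          unfolding Sx_def W_def using rvX[OF _ n] rvY[OF _ n]
          by (intro borel_measurable_add borel_measurable_sum) auto
      qed
      have Zv_m: "Zv \<in> measurable \<Omega> (PiM Ns (\<lambda>_. borel))"
        unfolding Zv_def using rvZ by (intro measurable_restrict) auto
      have qv_m: "qv \<in> measurable \<Omega> (PiM Ns (\<lambda>_. borel))"
        unfolding qv_def
      proof (rule measurable_restrict)
        fix n assume n: "n \<in> Ns"
        show "(\<lambda>\<omega>. (\<Sum>m\<in>As. X m n \<omega>) + (\<Sum>k\<in>{1..K}. Y k n \<omega>) + Z s n \<omega>) \<in> measurable \<Omega> borel"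
          using rvX[OF _ n] rvY[OF _ n] rvZ[OF n]
          by (intro borel_measurable_add borel_measurable_sum) auto
      qed
      have addm: "addf u \<in> measurable (PiM Ns (\<lambda>_. borel)) (PiM Ns (\<lambda>_. borel))" for u
        unfolding addf_def
      proof (rule measurable_restrict)
        fix n assume n: "n \<in> Ns"
        show "(\<lambda>z. u n + z n) \<in> measurable (PiM Ns (\<lambda>_. borel)) borel"
          using measurable_component_singleton[OF n, of "\<lambda>_. borel"] by (intro borel_measurable_add) auto
      qed
      have Xv': "X m n \<omega> \<in> {-1, 1}" if "m \<in> As" "n \<in> Ns" "\<omega> \<in> space \<Omega>" for m n \<omega>
        using X_vals[OF subsetD[OF As_sub that(1)] _ that(3)] that(2) unfolding Ns_def by simp
      have xv: "\<xi> \<omega> \<in> Fx" if "\<omega> \<in> space \<Omega>" for \<omega>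
        unfolding \<xi>_def Fx_def Aset_def using Xv'[OF _ _ that] by (auto simp: restrict_PiE_iff)
      have xs: "{x} \<in> sets (PiM Aset (\<lambda>_. borel))" if "x \<in> Fx" for x
        using that finAset unfolding Fx_def by (intro singleton_PiM) (auto simp: PiE_iff)
      have us: "{u} \<in> sets (PiM Ns (\<lambda>_. borel))" if "u \<in> Fu" for u
        using that finNs unfolding Fu_def by (intro singleton_PiM) (auto simp: PiE_iff)
      have uv: "Uv \<omega> \<in> Fu" if "\<omega> \<in> space \<Omega>" for \<omega>
        unfolding Uv_def Fu_def using Uv_vals[OF _ that] by (auto simp: restrict_PiE_iff)
      have ue: "{\<omega>\<in>space \<Omega>. Uv \<omega> = u} \<in> events" if "u \<in> Fu" for u
      proof -
        have "Uv -` {u} \<inter> space \<Omega> \<in> events" by (rule measurable_sets[OF Uv_m us[OF that]])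
        moreover have "Uv -` {u} \<inter> space \<Omega> = {\<omega>\<in>space \<Omega>. Uv \<omega> = u}" by auto
        ultimately show ?thesis by simp
      qed
      have qeq: "qv \<omega> = addf (Uv \<omega>) (Zv \<omega>)" for \<omega>
        unfolding qv_def addf_def Uv_def Zv_def Sx_def W_def by (auto simp: fun_eq_iff)
      define I1 where "I1 = {Xi m n |m n. m \<in> {1..M} \<and> n \<in> {1..N}} \<union> {Yi k n |k n. k \<in> {1..K} \<and> n \<in> {1..N}}"
      define I2 where "I2 = {Zi n |n. n \<in> {1..N}}"
      have iv12: "indep_var (PiM I1 (\<lambda>_. borel)) (\<lambda>\<omega>. \<lambda>i\<in>I1. V i \<omega>) (PiM I2 (\<lambda>_. borel)) (\<lambda>\<omega>. \<lambda>i\<in>I2. V i \<omega>)"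
        by (rule indep_var_restrict[OF indV]) (auto simp: I1_def I2_def I_def)
      define f1 where "f1 r = ((\<lambda>(m, n)\<in>Aset. r (Xi m n)), (\<lambda>n\<in>Ns. (\<Sum>m\<in>As. r (Xi m n)) + (\<Sum>k\<in>{1..K}. r (Yi k n))))" for r :: "rv_idx \<Rightarrow> real"
      define f2 where "f2 r = (\<lambda>n\<in>Ns. r (Zi n))" for r :: "rv_idx \<Rightarrow> real"
      have XiI1: "Xi m n \<in> I1" if "m \<in> As" "n \<in> Ns" for m n using that As_sub unfolding I1_def Ns_def by auto
      have YiI1: "Yi k n \<in> I1" if "k \<in> {1..K}" "n \<in> Ns" for k n using that unfolding I1_def Ns_def by auto
      have ZiI2: "Zi n \<in> I2" if "n \<in> Ns" for n using that unfolding I2_def Ns_def by auto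
      have f1m: "f1 \<in> measurable (PiM I1 (\<lambda>_. borel)) (PiM Aset (\<lambda>_. borel) \<Otimes>\<^sub>M PiM Ns (\<lambda>_. borel))"
        unfolding f1_def
      proof (intro measurable_Pair measurable_restrict)
        fix i assume "i \<in> Aset"
        then obtain m n where i: "i = (m, n)" "m \<in> As" "n \<in> Ns" unfolding Aset_def by auto
        show "(\<lambda>r::rv_idx \<Rightarrow> real. case i of (m, n) \<Rightarrow> r (Xi m n)) \<in> measurable (PiM I1 (\<lambda>_. borel)) borel"
          using measurable_component_singleton[OF XiI1[OF i(2,3)], of "\<lambda>_. borel"] i(1) by simp
      next
        fix n assume n: "n \<in> Ns"
        show "(\<lambda>r::rv_idx \<Rightarrow> real. (\<Sum>m\<in>As. r (Xi m n)) + (\<Sum>k\<in>{1..K}. r (Yi k n))) \<in> measurable (PiM I1 (\<lambda>_. borel)) borel"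
        proof (intro borel_measurable_add borel_measurable_sum)
          fix m assume "m \<in> As"
          show "(\<lambda>r::rv_idx \<Rightarrow> real. r (Xi m n)) \<in> borel_measurable (PiM I1 (\<lambda>_. borel))"
            by (rule measurable_component_singleton[OF XiI1[OF \<open>m \<in> As\<close> n]])
        next
          fix k assume "k \<in> {1..K}"
          show "(\<lambda>r::rv_idx \<Rightarrow> real. r (Yi k n)) \<in> borel_measurable (PiM I1 (\<lambda>_. borel))"
            by (rule measurable_component_singleton[OF YiI1[OF \<open>k \<in> {1..K}\<close> n]])
        qed
      qed
      have f2m: "f2 \<in> measurable (PiM I2 (\<lambda>_. borel)) (PiM Ns (\<lambda>_. borel))"
        unfolding f2_def
      proof (rule measurable_restrict)
        fix n assume n: "n \<in> Ns"
        show "(\<lambda>r::rv_idx \<Rightarrow> real. r (Zi n)) \<in> measurable (PiM I2 (\<lambda>_. borel)) borel"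
          using measurable_component_singleton[OF ZiI2[OF n], of "\<lambda>_. borel"] by simp
      qed
      have e1: "(f1 \<circ> (\<lambda>\<omega>. \<lambda>i\<in>I1. V i \<omega>)) \<omega> = (\<xi> \<omega>, Uv \<omega>)" for \<omega>
      proof -
        have a: "(\<lambda>(m, n)\<in>Aset. (\<lambda>i\<in>I1. V i \<omega>) (Xi m n)) = \<xi> \<omega>"
          unfolding \<xi>_def using XiI1 by (auto simp: fun_eq_iff V_def Aset_def)
        have b: "(\<lambda>n\<in>Ns. (\<Sum>m\<in>As. (\<lambda>i\<in>I1. V i \<omega>) (Xi m n)) + (\<Sum>k\<in>{1..K}. (\<lambda>i\<in>I1. V i \<omega>) (Yi k n))) = Uv \<omega>"
          unfolding Uv_def Sx_def W_def using XiI1 YiI1 by (auto simp: fun_eq_iff V_def intro!: sum.cong)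
        show ?thesis unfolding f1_def comp_def a b ..
      qed
      have e2: "(f2 \<circ> (\<lambda>\<omega>. \<lambda>i\<in>I2. V i \<omega>)) \<omega> = Zv \<omega>" for \<omega>
        unfolding f2_def Zv_def comp_def using ZiI2 by (auto simp: fun_eq_iff V_def)
      have ind: "prob {\<omega>\<in>space \<Omega>. \<xi> \<omega> = x \<and> Uv \<omega> = u \<and> Zv \<omega> \<in> B}
         = prob {\<omega>\<in>space \<Omega>. \<xi> \<omega> = x \<and> Uv \<omega> = u} * prob {\<omega>\<in>space \<Omega>. Zv \<omega> \<in> B}"
        if x: "x \<in> Fx" and u: "u \<in> Fu" and B: "B \<in> sets (PiM Ns (\<lambda>_. borel))" for x u B
      proof -
        have xu: "{(x, u)} \<in> sets (PiM Aset (\<lambda>_. borel) \<Otimes>\<^sub>M PiM Ns (\<lambda>_. borel))"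
          using pair_measureI[OF xs[OF x] us[OF u]] by simp
        define R1 where "R1 = (\<lambda>\<omega>. \<lambda>i\<in>I1. V i \<omega>)"
        define R2 where "R2 = (\<lambda>\<omega>. \<lambda>i\<in>I2. V i \<omega>)"
        have A1: "f1 -` {(x, u)} \<inter> space (PiM I1 (\<lambda>_. borel)) \<in> sets (PiM I1 (\<lambda>_. borel))"
          by (rule measurable_sets[OF f1m xu])
        have A2: "f2 -` B \<inter> space (PiM I2 (\<lambda>_. borel)) \<in> sets (PiM I2 (\<lambda>_. borel))"
          by (rule measurable_sets[OF f2m B])
        have R1s: "R1 \<omega> \<in> space (PiM I1 (\<lambda>_. borel))" for \<omega> unfolding R1_def by (simp add: space_PiM)
        have R2s: "R2 \<omega> \<in> space (PiM I2 (\<lambda>_. borel))" for \<omega> unfolding R2_def by (simp add: space_PiM)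
        have "prob ((\<lambda>\<omega>. (R1 \<omega>, R2 \<omega>)) -` ((f1 -` {(x, u)} \<inter> space (PiM I1 (\<lambda>_. borel))) \<times> (f2 -` B \<inter> space (PiM I2 (\<lambda>_. borel)))) \<inter> space \<Omega>) =
          prob (R1 -` (f1 -` {(x, u)} \<inter> space (PiM I1 (\<lambda>_. borel))) \<inter> space \<Omega>) * prob (R2 -` (f2 -` B \<inter> space (PiM I2 (\<lambda>_. borel))) \<inter> space \<Omega>)"
          unfolding R1_def R2_def by (rule indep_varD[OF iv12 A1 A2])
        moreover have "(\<lambda>\<omega>. (R1 \<omega>, R2 \<omega>)) -` ((f1 -` {(x, u)} \<inter> space (PiM I1 (\<lambda>_. borel))) \<times> (f2 -` B \<inter> space (PiM I2 (\<lambda>_. borel)))) \<inter> space \<Omega>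
            = {\<omega>\<in>space \<Omega>. \<xi> \<omega> = x \<and> Uv \<omega> = u \<and> Zv \<omega> \<in> B}"
          using e1 e2 R1s R2s unfolding R1_def R2_def comp_def by auto
        moreover have "R1 -` (f1 -` {(x, u)} \<inter> space (PiM I1 (\<lambda>_. borel))) \<inter> space \<Omega> = {\<omega>\<in>space \<Omega>. \<xi> \<omega> = x \<and> Uv \<omega> = u}"
          using e1 R1s unfolding R1_def comp_def by auto
        moreover have "R2 -` (f2 -` B \<inter> space (PiM I2 (\<lambda>_. borel))) \<inter> space \<Omega> = {\<omega>\<in>space \<Omega>. Zv \<omega> \<in> B}"
          using e2 R2s unfolding R2_def comp_def by auto
        ultimately show ?thesis by simp
      qed
      have core: "MI = 0 \<or> MI \<le> (\<Sum>x\<in>Fx. \<Sum>u\<in>Fu. prob {\<omega>\<in>space \<Omega>. \<xi> \<omega> = x \<and> Uv \<omega> = u} *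
        log 2 (prob {\<omega>\<in>space \<Omega>. \<xi> \<omega> = x \<and> Uv \<omega> = u} /
               (prob {\<omega>\<in>space \<Omega>. \<xi> \<omega> = x} * prob {\<omega>\<in>space \<Omega>. Uv \<omega> = u})))"
        unfolding MI_def
        by (rule core_dpi[where Fx=Fx and Fu=Fu and Uv=Uv and Zv=Zv and addf=addf])
           (use xi_m finAset xv xs finVals finNs uv ue Zv_m addm qv_m qeq ind in \<open>auto simp: Fx_def Fu_def intro!: finite_PiE\<close>)
      define Px where "Px x = prob {\<omega>\<in>space \<Omega>. \<xi> \<omega> = x}" for x
      define Pu where "Pu u = prob {\<omega>\<in>space \<Omega>. Uv \<omega> = u}" for u
      define Pxu where "Pxu x u = prob {\<omega>\<in>space \<Omega>. \<xi> \<omega> = x \<and> Uv \<omega> = u}" for x u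
      define PW where "PW n w = prob {\<omega>\<in>space \<Omega>. W n \<omega> = w}" for n w
      define PU where "PU n v = prob {\<omega>\<in>space \<Omega>. Sx n \<omega> + W n \<omega> = v}" for n v
      define sx where "sx n x = (\<Sum>m\<in>As. x (m, n))" for n and x :: "nat \<times> nat \<Rightarrow> real"
      have Ns_ne: "Ns \<noteq> {}" using False unfolding Ns_def by auto
      have indJU: "indep_vars (\<lambda>_. borel) V (JU n)" if "n \<in> Ns" for n
        using indep_vars_subset[OF indV JU_I[OF that]] .
      have PUfact: "Pu u = (\<Prod>n\<in>Ns. PU n (u n))" if u: "u \<in> Fu" for u
      proof -
        define A where "A n = {r \<in> space (PiM (JU n) (\<lambda>_. borel)). (\<Sum>i\<in>JU n. r i) = u n}" for n
        have Am: "A n \<in> sets (PiM (JU n) (\<lambda>_. borel))" if "n \<in> Ns" for n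
        proof -
          have "(\<lambda>r::rv_idx \<Rightarrow> real. \<Sum>i\<in>JU n. r i) \<in> borel_measurable (PiM (JU n) (\<lambda>_. borel))"
            by (intro borel_measurable_sum) (rule measurable_component_singleton)
          from measurable_sets[OF this, of "{u n}"] show ?thesis unfolding A_def
            by (simp add: vimage_def Int_def conj_commute)
        qed
        have disj: "disjoint_family_on JU Ns" unfolding disjoint_family_on_def JU_def by auto
        have "prob {\<omega>\<in>space \<Omega>. \<forall>n\<in>Ns. (\<lambda>i\<in>JU n. V i \<omega>) \<in> A n} = (\<Prod>n\<in>Ns. prob {\<omega>\<in>space \<Omega>. (\<lambda>i\<in>JU n. V i \<omega>) \<in> A n})"
          by (rule indep_blocks_prob[OF indV JU_I disj finNs Ns_ne Am])
        moreover have "{\<omega>\<in>space \<Omega>. (\<lambda>i\<in>JU n. V i \<omega>) \<in> A n} = {\<omega>\<in>space \<Omega>. Sx n \<omega> + W n \<omega> = u n}" for n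
          unfolding A_def using sumU by (auto simp: space_PiM)
        moreover have "{\<omega>\<in>space \<Omega>. \<forall>n\<in>Ns. (\<lambda>i\<in>JU n. V i \<omega>) \<in> A n} = {\<omega>\<in>space \<Omega>. Uv \<omega> = u}"
        proof -
          have "(\<forall>n\<in>Ns. (\<lambda>i\<in>JU n. V i \<omega>) \<in> A n) \<longleftrightarrow> Uv \<omega> = u" for \<omega>
          proof -
            have "(\<forall>n\<in>Ns. (\<lambda>i\<in>JU n. V i \<omega>) \<in> A n) \<longleftrightarrow> (\<forall>n\<in>Ns. Sx n \<omega> + W n \<omega> = u n)"
              unfolding A_def using sumU by (simp add: space_PiM)
            also have "\<dots> \<longleftrightarrow> Uv \<omega> = u"
              using u unfolding Uv_def Fu_def by (auto simp: fun_eq_iff PiE_iff extensional_def)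
            finally show ?thesis .
          qed
          then show ?thesis by auto
        qed
        ultimately show ?thesis unfolding Pu_def PU_def by simp
      qed
      have Pxufact: "Pxu x u = Px x * (\<Prod>n\<in>Ns. PW n (u n - sx n x))" if x: "x \<in> Fx" and u: "u \<in> Fu" for x u
      proof -
        define K0 where "K0 = (\<lambda>(m, n). Xi m n) ` Aset"
        define Kb where "Kb j = (if j = 0 then K0 else JW j)" for j
        define L0 where "L0 = insert (0::nat) Ns"
        define A where "A j = (if j = 0 then {r \<in> space (PiM K0 (\<lambda>_. borel)). (\<lambda>(m, n)\<in>Aset. r (Xi m n)) = x}
            else {r \<in> space (PiM (JW j) (\<lambda>_. borel)). (\<Sum>k\<in>{1..K}. r (Yi k j)) = u j - sx j x})" for j
        have zN: "0 \<notin> Ns" unfolding Ns_def by auto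
        have K0I: "K0 \<subseteq> I" unfolding K0_def Aset_def I_def Ns_def using As_sub by auto
        have KbI: "Kb j \<subseteq> I" if "j \<in> L0" for j
          using that K0I JW_I zN unfolding Kb_def L0_def by auto
        have disj: "disjoint_family_on Kb L0"
          unfolding disjoint_family_on_def Kb_def L0_def K0_def JW_def by auto
        have finL0: "finite L0" "L0 \<noteq> {}" unfolding L0_def using finNs by auto
        have Am: "A j \<in> sets (PiM (Kb j) (\<lambda>_. borel))" if "j \<in> L0" for j
        proof (cases "j = 0")
          case True
          have g0: "(\<lambda>r::rv_idx \<Rightarrow> real. \<lambda>(m, n)\<in>Aset. r (Xi m n)) \<in> measurable (PiM K0 (\<lambda>_. borel)) (PiM Aset (\<lambda>_. borel))"
          proof (rule measurable_restrict)
            fix i assume "i \<in> Aset"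
            then obtain m n where i: "i = (m, n)" "(m, n) \<in> Aset" by (cases i) auto
            then have "Xi m n \<in> K0" unfolding K0_def by force
            then show "(\<lambda>r::rv_idx \<Rightarrow> real. case i of (m, n) \<Rightarrow> r (Xi m n)) \<in> measurable (PiM K0 (\<lambda>_. borel)) borel"
              using measurable_component_singleton[of "Xi m n" K0 "\<lambda>_. borel"] i(1) by simp
          qed
          from measurable_sets[OF g0 xs[OF x]] show ?thesis using True unfolding A_def Kb_def
            by (simp add: vimage_def Int_def conj_commute)
        next
          case False
          then have j: "j \<in> Ns" using that unfolding L0_def by auto
          have "(\<lambda>r::rv_idx \<Rightarrow> real. \<Sum>k\<in>{1..K}. r (Yi k j)) \<in> borel_measurable (PiM (JW j) (\<lambda>_. borel))"
            by (intro borel_measurable_sum measurable_component_singleton) (auto simp: JW_def)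
          from measurable_sets[OF this, of "{u j - sx j x}"] show ?thesis using False unfolding A_def Kb_def
            by (simp add: vimage_def Int_def conj_commute)
        qed
        have "prob {\<omega>\<in>space \<Omega>. \<forall>j\<in>L0. (\<lambda>i\<in>Kb j. V i \<omega>) \<in> A j} = (\<Prod>j\<in>L0. prob {\<omega>\<in>space \<Omega>. (\<lambda>i\<in>Kb j. V i \<omega>) \<in> A j})"
          by (rule indep_blocks_prob[OF indV KbI disj finL0 Am])
        moreover have ev0: "{\<omega>\<in>space \<Omega>. (\<lambda>i\<in>Kb 0. V i \<omega>) \<in> A 0} = {\<omega>\<in>space \<Omega>. \<xi> \<omega> = x}"
        proof -
          have "(\<lambda>(m, n)\<in>Aset. (\<lambda>i\<in>K0. V i \<omega>) (Xi m n)) = \<xi> \<omega>" for \<omega>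
            unfolding \<xi>_def K0_def by (auto simp: fun_eq_iff V_def)
          then show ?thesis unfolding A_def Kb_def by (auto simp: space_PiM)
        qed
        moreover have evn: "{\<omega>\<in>space \<Omega>. (\<lambda>i\<in>Kb n. V i \<omega>) \<in> A n} = {\<omega>\<in>space \<Omega>. W n \<omega> = u n - sx n x}" if "n \<in> Ns" for n
        proof -
          have n0: "n \<noteq> 0" using that zN by (metis gr0I)
          have "(\<Sum>k\<in>{1..K}. (\<lambda>i\<in>JW n. V i \<omega>) (Yi k n)) = W n \<omega>" for \<omega>
            unfolding W_def JW_def V_def by (auto intro!: sum.cong)
          then show ?thesis unfolding A_def Kb_def using n0 by (auto simp: space_PiM)
        qed
        moreover have "{\<omega>\<in>space \<Omega>. \<forall>j\<in>L0. (\<lambda>i\<in>Kb j. V i \<omega>) \<in> A j} = {\<omega>\<in>space \<Omega>. \<xi> \<omega> = x \<and> Uv \<omega> = u}"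
        proof -
          have "(\<forall>j\<in>L0. (\<lambda>i\<in>Kb j. V i \<omega>) \<in> A j) \<longleftrightarrow> \<xi> \<omega> = x \<and> Uv \<omega> = u" if w: "\<omega> \<in> space \<Omega>" for \<omega>
          proof -
            have "(\<forall>j\<in>L0. (\<lambda>i\<in>Kb j. V i \<omega>) \<in> A j) \<longleftrightarrow> \<xi> \<omega> = x \<and> (\<forall>n\<in>Ns. W n \<omega> = u n - sx n x)"
              using ev0 evn w unfolding L0_def by blast
            also have "\<dots> \<longleftrightarrow> \<xi> \<omega> = x \<and> Uv \<omega> = u"
            proof (cases "\<xi> \<omega> = x")
              case True
              have sxe: "Sx n \<omega> = sx n x" if "n \<in> Ns" for n
              proof -
                have "X m n \<omega> = x (m, n)" if "m \<in> As" for m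
                  using fun_cong[OF True, of "(m, n)"] that \<open>n \<in> Ns\<close> unfolding \<xi>_def Aset_def by simp
                then show ?thesis unfolding Sx_def sx_def by (auto intro!: sum.cong)
              qed
              have "(\<forall>n\<in>Ns. W n \<omega> = u n - sx n x) \<longleftrightarrow> (\<forall>n\<in>Ns. Sx n \<omega> + W n \<omega> = u n)"
                using sxe by auto
              also have "\<dots> \<longleftrightarrow> Uv \<omega> = u"
                using u unfolding Uv_def Fu_def by (auto simp: fun_eq_iff PiE_iff extensional_def)
              finally show ?thesis using True by simp
            qed simp
            finally show ?thesis .
          qed
          then show ?thesis by auto
        qed
        moreover have "(\<Prod>j\<in>L0. prob {\<omega>\<in>space \<Omega>. (\<lambda>i\<in>Kb j. V i \<omega>) \<in> A j}) =
            prob {\<omega>\<in>space \<Omega>. (\<lambda>i\<in>Kb 0. V i \<omega>) \<in> A 0} * (\<Prod>n\<in>Ns. prob {\<omega>\<in>space \<Omega>. (\<lambda>i\<in>Kb n. V i \<omega>) \<in> A n})"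
          unfolding L0_def using finNs zN by simp
        moreover have "(\<Prod>n\<in>Ns. prob {\<omega>\<in>space \<Omega>. (\<lambda>i\<in>Kb n. V i \<omega>) \<in> A n}) = (\<Prod>n\<in>Ns. PW n (u n - sx n x))"
          using evn unfolding PW_def by (intro prod.cong) auto
        ultimately show ?thesis unfolding Pxu_def Px_def by (simp add: ev0)
      qed
      have EW: "integrable \<Omega> (\<lambda>\<omega>. log 2 (PW n (W n \<omega>)))" "(\<integral>\<omega>. log 2 (PW n (W n \<omega>)) \<partial>\<Omega>) = - binom_entropy K (p n)"
        if n: "n \<in> Ns" for n
      proof -
        have indJW: "indep_vars (\<lambda>_. borel) V (JW n)" using indep_vars_subset[OF indV JW_I[OF n]] .
        have vals: "V j \<omega> \<in> {-1, 1}" if "j \<in> JW n" "\<omega> \<in> space \<Omega>" for j \<omega>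
          using V_vals[OF _ n that(2)] JW_JU[of n] that(1) by auto
        have pr: "prob {\<omega>\<in>space \<Omega>. V j \<omega> = 1} = p n" if "j \<in> JW n" for j
          using V_prob[OF _ n] JW_JU[of n] that by auto
        note E = sum_pm1_entropy[OF finJW indJW vals pr pn[OF n]]
        show "integrable \<Omega> (\<lambda>\<omega>. log 2 (PW n (W n \<omega>)))" using E(2) unfolding sumW PW_def .
        show "(\<integral>\<omega>. log 2 (PW n (W n \<omega>)) \<partial>\<Omega>) = - binom_entropy K (p n)" using E(1) unfolding sumW PW_def cardJW .
      qed
      have EU: "integrable \<Omega> (\<lambda>\<omega>. log 2 (PU n (Sx n \<omega> + W n \<omega>)))" "(\<integral>\<omega>. log 2 (PU n (Sx n \<omega> + W n \<omega>)) \<partial>\<Omega>) = - binom_entropy Lc (p n)"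
        if n: "n \<in> Ns" for n
      proof -
        have vals: "V j \<omega> \<in> {-1, 1}" if "j \<in> JU n" "\<omega> \<in> space \<Omega>" for j \<omega>
          using V_vals[OF that(1) n that(2)] .
        have pr: "prob {\<omega>\<in>space \<Omega>. V j \<omega> = 1} = p n" if "j \<in> JU n" for j
          using V_prob[OF that n] .
        note E = sum_pm1_entropy[OF finJU indJU[OF n] vals pr pn[OF n]]
        show "integrable \<Omega> (\<lambda>\<omega>. log 2 (PU n (Sx n \<omega> + W n \<omega>)))" using E(2) unfolding sumU PU_def .
        show "(\<integral>\<omega>. log 2 (PU n (Sx n \<omega> + W n \<omega>)) \<partial>\<Omega>) = - binom_entropy Lc (p n)" using E(1) unfolding sumU PU_def cardJU .
      qed
      define G where "G xu = (\<Sum>n\<in>Ns. log 2 (PW n (snd xu n - sx n (fst xu))) - log 2 (PU n (snd xu n)))" for xu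
      have Px_nn: "0 \<le> Px x" for x unfolding Px_def by simp
      have PW_nn: "0 \<le> PW n w" for n w unfolding PW_def by simp
      have PU_nn: "0 \<le> PU n w" for n w unfolding PU_def by simp
      have ex: "{\<omega>\<in>space \<Omega>. \<xi> \<omega> = x} \<in> events" if "x \<in> Fx" for x
      proof -
        have "\<xi> -` {x} \<inter> space \<Omega> \<in> events" by (rule measurable_sets[OF xi_m xs[OF that]])
        moreover have "\<xi> -` {x} \<inter> space \<Omega> = {\<omega>\<in>space \<Omega>. \<xi> \<omega> = x}" by auto
        ultimately show ?thesis by simp
      qed
      have exu: "{\<omega>\<in>space \<Omega>. (\<xi> \<omega>, Uv \<omega>) = xu} \<in> events" if "xu \<in> Fx \<times> Fu" for xu
      proof -
        have "{\<omega>\<in>space \<Omega>. (\<xi> \<omega>, Uv \<omega>) = xu} = {\<omega>\<in>space \<Omega>. \<xi> \<omega> = fst xu} \<inter> {\<omega>\<in>space \<Omega>. Uv \<omega> = snd xu}"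
          by (cases xu) auto
        then show ?thesis using ex[of "fst xu"] ue[of "snd xu"] that by auto
      qed
      have T1: "Pxu x u * log 2 (Pxu x u / (Px x * Pu u)) = Pxu x u * G (x, u)" if x: "x \<in> Fx" and u: "u \<in> Fu" for x u
      proof (cases "Pxu x u = 0")
        case True then show ?thesis by simp
      next
        case False
        have "Pxu x u \<le> Pu u" unfolding Pxu_def Pu_def using ue[OF u] by (intro finite_measure_mono) auto
        have Pxu_pos: "0 < Pxu x u" using False unfolding Pxu_def by (simp add: less_le)
        then have Pu_pos: "0 < Pu u" using \<open>Pxu x u \<le> Pu u\<close> by simp
        have Px0: "Px x \<noteq> 0" and PW0: "(\<Prod>n\<in>Ns. PW n (u n - sx n x)) \<noteq> 0"
          using False Pxufact[OF x u] by auto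
        have PWpos: "0 < PW n (u n - sx n x)" if "n \<in> Ns" for n
          using PW0 finNs that PW_nn[of n "u n - sx n x"] by (auto simp: less_le)
        have PUpos: "0 < PU n (u n)" if "n \<in> Ns" for n
          using Pu_pos PUfact[OF u] finNs that PU_nn[of n "u n"] by (auto simp: less_le)
        have "Pxu x u / (Px x * Pu u) = (\<Prod>n\<in>Ns. PW n (u n - sx n x)) / (\<Prod>n\<in>Ns. PU n (u n))"
          using Pxufact[OF x u] PUfact[OF u] Px0 by simp
        have "log 2 (Pxu x u / (Px x * Pu u)) = log 2 (\<Prod>n\<in>Ns. PW n (u n - sx n x)) - log 2 (\<Prod>n\<in>Ns. PU n (u n))"
        proof -
          have p1: "0 < (\<Prod>n\<in>Ns. PW n (u n - sx n x))" using PWpos by (intro prod_pos) auto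
          have p2: "0 < (\<Prod>n\<in>Ns. PU n (u n))" using PUpos by (intro prod_pos) auto
          show ?thesis unfolding \<open>Pxu x u / (Px x * Pu u) = _\<close> using p1 p2 by (simp add: log_divide)
        qed
        also have "\<dots> = G (x, u)"
          unfolding G_def using PWpos PUpos finNs by (simp add: log_prod_pos sum_subtractf)
        finally show ?thesis by simp
      qed
      have Idisc: "(\<Sum>x\<in>Fx. \<Sum>u\<in>Fu. Pxu x u * log 2 (Pxu x u / (Px x * Pu u))) =
          (\<Sum>n\<in>Ns. binom_entropy Lc (p n) - binom_entropy K (p n))"
      proof -
        have "(\<Sum>x\<in>Fx. \<Sum>u\<in>Fu. Pxu x u * log 2 (Pxu x u / (Px x * Pu u))) = (\<Sum>x\<in>Fx. \<Sum>u\<in>Fu. Pxu x u * G (x, u))"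
          by (intro sum.cong refl T1)
        also have "\<dots> = (\<Sum>xu\<in>Fx \<times> Fu. prob {\<omega>\<in>space \<Omega>. (\<xi> \<omega>, Uv \<omega>) = xu} * G xu)"
          unfolding Pxu_def by (simp add: sum.cartesian_product split_def prod_eq_iff)
        also have "\<dots> = (\<integral>\<omega>. G (\<xi> \<omega>, Uv \<omega>) \<partial>\<Omega>)"
          by (rule integral_finite_valued[symmetric]) (use finAset finVals finNs xv uv exu in \<open>auto simp: Fx_def Fu_def intro!: finite_PiE\<close>)
        also have "\<dots> = (\<integral>\<omega>. (\<Sum>n\<in>Ns. log 2 (PW n (W n \<omega>)) - log 2 (PU n (Sx n \<omega> + W n \<omega>))) \<partial>\<Omega>)"
        proof (rule Bochner_Integration.integral_cong[OF refl])
          fix \<omega> assume w: "\<omega> \<in> space \<Omega>"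
          have "sx n (\<xi> \<omega>) = Sx n \<omega>" if "n \<in> Ns" for n
            unfolding sx_def Sx_def \<xi>_def Aset_def using that by (auto intro!: sum.cong)
          then show "G (\<xi> \<omega>, Uv \<omega>) = (\<Sum>n\<in>Ns. log 2 (PW n (W n \<omega>)) - log 2 (PU n (Sx n \<omega> + W n \<omega>)))"
            unfolding G_def Uv_def by (intro sum.cong) auto
        qed
        also have "\<dots> = (\<Sum>n\<in>Ns. (\<integral>\<omega>. log 2 (PW n (W n \<omega>)) - log 2 (PU n (Sx n \<omega> + W n \<omega>)) \<partial>\<Omega>))"
          using EW(1) EU(1) by (intro Bochner_Integration.integral_sum) auto
        also have "\<dots> = (\<Sum>n\<in>Ns. binom_entropy Lc (p n) - binom_entropy K (p n))"
          using EW EU by (intro sum.cong refl) (simp add: Bochner_Integration.integral_diff)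
        finally show ?thesis .
      qed
      have bound: "(\<Sum>n\<in>Ns. binom_entropy Lc (p n) - binom_entropy K (p n)) \<le> real N * (real (M - 1) * \<beta>)"
      proof -
        have Mpos: "0 < real (M - 1)" using M2 by simp
        have "binom_entropy Lc (p n) - binom_entropy K (p n) \<le> real (M - 1) * \<beta>" if "n \<in> Ns" for n
          using hyp[of n] that Mpos unfolding Ns_def Lc_def by (simp add: divide_le_eq mult.commute)
        then have "(\<Sum>n\<in>Ns. binom_entropy Lc (p n) - binom_entropy K (p n)) \<le> (\<Sum>n\<in>Ns. real (M - 1) * \<beta>)"
          by (rule sum_mono)
        also have "\<dots> = real N * (real (M - 1) * \<beta>)" unfolding Ns_def by simp
        finally show ?thesis .
      qed
      have nn: "0 \<le> real N * (real (M - 1) * \<beta>)" using beta by simp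
      show ?thesis using core Idisc bound nn unfolding Pxu_def Px_def Pu_def by auto
    qed
    have pos: "0 < real (card As) * real N" using False cardAs M2 by simp
    have "MI \<le> \<beta> * (real (card As) * real N)" using main cardAs by (simp add: algebra_simps)
    then show ?thesis using pos by (simp add: divide_le_eq)
  qed
  then show "prob_space.mutual_information \<Omega> 2
        (PiM (({1..M} - {s}) \<times> {1..N}) (\<lambda>_. borel))
        (PiM {1..N} (\<lambda>_. borel))
        (\<lambda>\<omega>. \<lambda>(m, n) \<in> ({1..M} - {s}) \<times> {1..N}. X m n \<omega>)
        (\<lambda>\<omega>. \<lambda>n \<in> {1..N}.
            (\<Sum>m \<in> {1..M} - {s}. X m n \<omega>) + (\<Sum>k \<in> {1..K}. Y k n \<omega>) + Z s n \<omega>)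
      / (real (card ({1..M} - {s})) * real N) \<le> \<beta>" unfolding goal_eq As_def .
qed
end
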